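(* Let $(X,d,A)$ be a metric pair and $p\in[1,\infty)$. If $(X,d)$ is complete, then $(\overline{D}_p(X,A),W_p)$ is complete.
   Context: A metric on $X$ is a map $d:X\times X\to[0,\infty]$ with $d(x,x)=0$, symmetry and the triangle inequality (infinite distances allowed, $d(x,y)=0$ need not imply $x=y$, so limits need not be unique); complete means every Cauchy sequence converges. A metric pair $(X,d,A)$ is such a space with a closed subset $A$. Write $d(x,A)=\inf_{a\in A}d(x,a)$, $A^\delta=\{x:d(x,A)<\delta\}$ for $\delta\in(0,\infty]$. $\overline{D}(X,A)$ is the set of countable formal sums $\hat\alpha=\sum_{i\in I}x_i$ of points of $X\setminus A$ (repetitions allowed); $0$ the empty sum. A matching of $\hat\alpha=\sum_{i\in I}x_i$, $\hat\beta=\sum_{j\in J}y_j$ is a formal sum $\sum_{k\in K}(x_k,y_{\varphi(k)})+\sum_{i\in I\setminus K}(x_i,z_i)+\sum_{j\in J\setminus\varphi(K)}(w_j,y_j)$ with $K\subset I$, $\varphi$ injective, $z_i,w_j\in A$; its $p$-cost is the $\ell^p$ norm of the distances of paired points; $W_p$ is the infimum of $p$-costs. $u_\delta(\alpha)$, $\ell_\delta(\alpha)$ are the restrictions of $\hat\alpha$ to $X\setminus A^\delta$ and to $A^\delta\setminus A$, and $\overline{D}_p(X,A)=\{\alpha: |u_\infty(\alpha)|<\infty,\ W_p(\ell_\infty(\alpha),0)<\infty\}$. *)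

theory Defs
  imports "HOL-Analysis.Analysis"
begin

definition emetric_on :: "'a set \<Rightarrow> ('a \<Rightarrow> 'a \<Rightarrow> ennreal) \<Rightarrow> bool" where
  "emetric_on X d \<longleftrightarrow>
     (\<forall>x\<in>X. d x x = 0) \<and> (\<forall>x\<in>X. \<forall>y\<in>X. d x y = d y x) \<and>
     (\<forall>x\<in>X. \<forall>y\<in>X. \<forall>z\<in>X. d x z \<le> d x y + d y z)"

definition eclosed_in :: "'a set \<Rightarrow> ('a \<Rightarrow> 'a \<Rightarrow> ennreal) \<Rightarrow> 'a set \<Rightarrow> bool" where
  "eclosed_in X d A \<longleftrightarrow> A \<subseteq> X \<and>
     (\<forall>x\<in>X - A. \<exists>e::ennreal>0. \<forall>y\<in>X. d x y < e \<longrightarrow> y \<notin> A)"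

definition metric_pair :: "'a set \<Rightarrow> ('a \<Rightarrow> 'a \<Rightarrow> ennreal) \<Rightarrow> 'a set \<Rightarrow> bool" where
  "metric_pair X d A \<longleftrightarrow> emetric_on X d \<and> eclosed_in X d A"

definition ecomplete_on :: "'b set \<Rightarrow> ('b \<Rightarrow> 'b \<Rightarrow> ennreal) \<Rightarrow> bool" where
  "ecomplete_on S ds \<longleftrightarrow>
     (\<forall>s::nat \<Rightarrow> 'b. (\<forall>n. s n \<in> S) \<and> (\<forall>e::ennreal>0. \<exists>N. \<forall>m\<ge>N. \<forall>n\<ge>N. ds (s m) (s n) < e)
        \<longrightarrow> (\<exists>l\<in>S. \<forall>e::ennreal>0. \<exists>N. \<forall>n\<ge>N. ds (s n) l < e))"

definition einfdist :: "('a \<Rightarrow> 'a \<Rightarrow> ennreal) \<Rightarrow> 'a \<Rightarrow> 'a set \<Rightarrow> ennreal" where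
  "einfdist d x A = (INF a\<in>A. d x a)"

definition epowr :: "ennreal \<Rightarrow> real \<Rightarrow> ennreal" where
  "epowr x r = (if x = top then top else ennreal (enn2real x powr r))"

text \<open>Formal sums (persistence diagrams) are represented by multiplicity functions
  'a \<Rightarrow> enat; the formal sum has index set {(x,k). k < m x}, the point of index (x,k) being x.\<close>
type_synonym 'a fsum = "'a \<Rightarrow> enat"

definition fs_idx :: "'a fsum \<Rightarrow> ('a \<times> nat) set" where
  "fs_idx \<alpha> = {(x, k). enat k < \<alpha> x}"

definition Dbar :: "'a set \<Rightarrow> 'a set \<Rightarrow> 'a fsum set" where
  "Dbar X A = {\<alpha>. countable {x. \<alpha> x \<noteq> 0} \<and> {x. \<alpha> x \<noteq> 0} \<subseteq> X - A}"

definition fs_zero :: "'a fsum" where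
  "fs_zero = (\<lambda>_. 0)"

definition is_matching :: "'a set \<Rightarrow> 'a fsum \<Rightarrow> 'a fsum \<Rightarrow> ('a \<times> nat) set \<Rightarrow>
    ('a \<times> nat \<Rightarrow> 'a \<times> nat) \<Rightarrow> ('a \<times> nat \<Rightarrow> 'a) \<Rightarrow> ('a \<times> nat \<Rightarrow> 'a) \<Rightarrow> bool" where
  "is_matching A \<alpha> \<beta> K \<phi> z w \<longleftrightarrow>
     K \<subseteq> fs_idx \<alpha> \<and> inj_on \<phi> K \<and> \<phi> ` K \<subseteq> fs_idx \<beta> \<and>
     z ` (fs_idx \<alpha> - K) \<subseteq> A \<and> w ` (fs_idx \<beta> - \<phi> ` K) \<subseteq> A"

definition matching_cost :: "('a \<Rightarrow> 'a \<Rightarrow> ennreal) \<Rightarrow> real \<Rightarrow> 'a fsum \<Rightarrow> 'a fsum \<Rightarrow>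
    ('a \<times> nat) set \<Rightarrow> ('a \<times> nat \<Rightarrow> 'a \<times> nat) \<Rightarrow> ('a \<times> nat \<Rightarrow> 'a) \<Rightarrow> ('a \<times> nat \<Rightarrow> 'a) \<Rightarrow> ennreal" where
  "matching_cost d p \<alpha> \<beta> K \<phi> z w =
     epowr ((\<Sum>\<^sub>\<infinity>k\<in>K. epowr (d (fst k) (fst (\<phi> k))) p)
          + (\<Sum>\<^sub>\<infinity>i\<in>fs_idx \<alpha> - K. epowr (d (fst i) (z i)) p)
          + (\<Sum>\<^sub>\<infinity>j\<in>fs_idx \<beta> - \<phi> ` K. epowr (d (w j) (fst j)) p)) (1 / p)"

definition Wp :: "('a \<Rightarrow> 'a \<Rightarrow> ennreal) \<Rightarrow> 'a set \<Rightarrow> real \<Rightarrow> 'a fsum \<Rightarrow> 'a fsum \<Rightarrow> ennreal" where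
  "Wp d A p \<alpha> \<beta> = (INF (K, \<phi>, z, w) \<in> {(K, \<phi>, z, w). is_matching A \<alpha> \<beta> K \<phi> z w}.
                        matching_cost d p \<alpha> \<beta> K \<phi> z w)"

definition fs_restrict :: "'a fsum \<Rightarrow> 'a set \<Rightarrow> 'a fsum" where
  "fs_restrict \<alpha> S = (\<lambda>x. if x \<in> S then \<alpha> x else 0)"

definition nbhd :: "'a set \<Rightarrow> ('a \<Rightarrow> 'a \<Rightarrow> ennreal) \<Rightarrow> 'a set \<Rightarrow> ennreal \<Rightarrow> 'a set" where
  "nbhd X d A \<delta> = {x\<in>X. einfdist d x A < \<delta>}"

definition upper_part :: "'a set \<Rightarrow> ('a \<Rightarrow> 'a \<Rightarrow> ennreal) \<Rightarrow> 'a set \<Rightarrow> ennreal \<Rightarrow> 'a fsum \<Rightarrow> 'a fsum" where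
  "upper_part X d A \<delta> \<alpha> = fs_restrict \<alpha> (X - nbhd X d A \<delta>)"

definition lower_part :: "'a set \<Rightarrow> ('a \<Rightarrow> 'a \<Rightarrow> ennreal) \<Rightarrow> 'a set \<Rightarrow> ennreal \<Rightarrow> 'a fsum \<Rightarrow> 'a fsum" where
  "lower_part X d A \<delta> \<alpha> = fs_restrict \<alpha> (nbhd X d A \<delta> - A)"

definition Dbar_p :: "'a set \<Rightarrow> ('a \<Rightarrow> 'a \<Rightarrow> ennreal) \<Rightarrow> 'a set \<Rightarrow> real \<Rightarrow> 'a fsum set" where
  "Dbar_p X d A p = {\<alpha>\<in>Dbar X A. finite (fs_idx (upper_part X d A top \<alpha>)) \<and>
                       Wp d A p (lower_part X d A top \<alpha>) fs_zero < top}"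

end

theory Submission
  imports Defs
begin

lemma epowr_top[simp]: "epowr top r = top" by (simp add: epowr_def)

lemma epowr_ennreal[simp]: "x \<ge> 0 \<Longrightarrow> epowr (ennreal x) r = ennreal (x powr r)"
  by (simp add: epowr_def)

lemma epowr_0[simp]: "epowr 0 r = 0"
  by (simp add: epowr_def)

lemma epowr_mono: assumes "x \<le> y" "r \<ge> 0" shows "epowr x r \<le> epowr y r"
proof (cases y rule: ennreal_cases)
  case (real b)
  show ?thesis
  proof (cases x rule: ennreal_cases)
    case (real a)
    then have "a \<le> b" using \<open>y = ennreal b\<close> \<open>0 \<le> b\<close> assms(1) by simp
    then show ?thesis using real \<open>y = ennreal b\<close> \<open>0 \<le> b\<close> assms(2)
      by (simp add: ennreal_leI powr_mono2)
  next
    case top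
    then show ?thesis using assms(1) \<open>y = ennreal b\<close> by (simp add: top_unique)
  qed
qed simp

lemma epowr_inv[simp]: assumes "r > 0" shows "epowr (epowr x r) (1/r) = x"
proof (cases x rule: ennreal_cases)
  case (real a)
  then show ?thesis using assms by (simp add: powr_powr)
qed simp

lemma epowr_inv'[simp]: assumes "r > 0" shows "epowr (epowr x (1/r)) r = x"
  using epowr_inv[of "1/r" x] assms by simp

lemma epowr_le_iff: assumes "r > 0" shows "epowr x r \<le> epowr y r \<longleftrightarrow> x \<le> y"
proof
  assume "epowr x r \<le> epowr y r"
  then have "epowr (epowr x r) (1/r) \<le> epowr (epowr y r) (1/r)"
    by (rule epowr_mono) (use assms in simp)
  then show "x \<le> y" using assms by simp
next
  assume "x \<le> y" then show "epowr x r \<le> epowr y r" using assms by (simp add: epowr_mono)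
qed

lemma epowr_eq_0_iff[simp]: assumes "r > 0" shows "epowr x r = 0 \<longleftrightarrow> x = 0"
proof
  assume "epowr x r = 0"
  then have "epowr (epowr x r) (1/r) = 0" by simp
  then show "x = 0" using assms by simp
qed simp

lemma epowr_eq_top_iff[simp]: assumes "r > 0" shows "epowr x r = top \<longleftrightarrow> x = top"
proof
  assume "epowr x r = top"
  then have "epowr (epowr x r) (1/r) = top" by simp
  then show "x = top" using assms by simp
qed simp

lemma epowr_le_swap: assumes "r > 0" shows "epowr x (1/r) \<le> y \<longleftrightarrow> x \<le> epowr y r"
proof -
  have "epowr x (1/r) \<le> y \<longleftrightarrow> epowr (epowr x (1/r)) r \<le> epowr y r"
    using epowr_le_iff[OF assms] by simp
  then show ?thesis using assms by simp
qed

lemma conv_real: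
  fixes F G A B p :: real
  assumes "F \<ge> 0" "G \<ge> 0" "A > 0" "B > 0" "p \<ge> 1"
  shows "(F+G) powr p \<le> (A+B) powr (p-1) * (A powr (1-p) * F powr p + B powr (1-p) * G powr p)"
proof -
  define l where "l = A/(A+B)"
  define X where "X = F/A"
  define Y where "Y = G/B"
  have l: "0 < l" "l < 1" using assms by (auto simp: l_def)
  have XY: "X \<ge> 0" "Y \<ge> 0" using assms by (auto simp: X_def Y_def)
  have e1: "l*X = F/(A+B)" using assms by (simp add: l_def X_def)
  have e2: "1 - l = B/(A+B)" using assms by (simp add: l_def field_simps)
  have e3: "(1-l)*Y = G/(A+B)" using assms by (simp add: e2 Y_def)
  have eq: "(F+G)/(A+B) = l * X + (1-l) * Y"
    by (simp add: e1 e3 add_divide_distrib)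
  have cv: "(l * X + (1-l) * Y) powr p \<le> l * X powr p + (1-l) * Y powr p"
  proof (cases "X = 0 \<or> Y = 0")
    case True
    have aux: "c powr p \<le> c" if "0 \<le> c" "c \<le> 1" for c :: real
    proof -
      have "c powr p \<le> c powr 1" using powr_mono'[of 1 p c] that assms by simp
      also have "\<dots> = c" using that by (cases "c = 0") simp_all
      finally show ?thesis .
    qed
    show ?thesis
    proof (cases "X = 0")
      case True
      have "((1-l)*Y) powr p = (1-l) powr p * Y powr p" using l XY by (simp add: powr_mult)
      also have "\<dots> \<le> (1-l) * Y powr p" using aux[of "1-l"] l by (intro mult_right_mono) auto
      finally show ?thesis using True assms by simp
    next
      case False
      then have "Y = 0" using \<open>X = 0 \<or> Y = 0\<close> by simp
      have "(l*X) powr p = l powr p * X powr p" using l XY by (simp add: powr_mult)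
      also have "\<dots> \<le> l * X powr p" using aux[of "l"] l by (intro mult_right_mono) auto
      finally show ?thesis using \<open>Y = 0\<close> assms by simp
    qed
  next
    case False
    then have "X > 0" "Y > 0" using XY by auto
    have "(\<lambda>x. x powr p) ((1 - (1-l)) *\<^sub>R X + (1-l) *\<^sub>R Y) \<le> (1 - (1-l)) * (\<lambda>x. x powr p) X + (1-l) * (\<lambda>x. x powr p) Y"
      by (rule convex_onD[OF powr_convex[OF assms(5)]]) (use l \<open>X > 0\<close> \<open>Y > 0\<close> in simp_all)
    then show ?thesis by simp
  qed
  have "(F+G) powr p = (A+B) powr p * ((F+G)/(A+B)) powr p" using assms by (simp add: powr_mult[symmetric])
  also have "\<dots> \<le> (A+B) powr p * (l * X powr p + (1-l) * Y powr p)"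
    using eq cv by (intro mult_left_mono) auto
  also have "\<dots> = (A+B) powr (p-1) * (A powr (1-p) * F powr p + B powr (1-p) * G powr p)"
  proof -
    have P: "(A+B) powr p = (A+B) powr (p-1) * (A+B)" using assms by (simp add: powr_diff)
    have Xp: "X powr p = F powr p / A powr p" using assms by (simp add: X_def powr_divide)
    have Yp: "Y powr p = G powr p / B powr p" using assms by (simp add: Y_def powr_divide)
    have Ap: "A powr (1-p) = A / A powr p" using assms by (simp add: powr_diff)
    have Bp: "B powr (1-p) = B / B powr p" using assms by (simp add: powr_diff)
    have pos: "A powr p > 0" "B powr p > 0" "(A+B) > 0" using assms by auto
    have alg: "Q*(A+B) * (A/(A+B) * (f/a) + (B/(A+B)) * (g/b)) = Q * (A/a * f + B/b * g)"
      for Q f a g b :: real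
    proof -
      have h1: "(A+B) * (A/(A+B)) = A" "(A+B) * (B/(A+B)) = B" using pos by simp_all
      have "Q*(A+B) * (A/(A+B) * (f/a) + (B/(A+B)) * (g/b)) =
            Q*((A+B) * (A/(A+B)))*(f/a) + Q*((A+B) * (B/(A+B)))*(g/b)"
        by (simp only: distrib_left mult.assoc[symmetric])
      also have "\<dots> = Q * (A/a * f + B/b * g)" unfolding h1 by (simp add: distrib_left)
      finally show ?thesis .
    qed
    show ?thesis unfolding e2 unfolding P Xp Yp Ap Bp l_def by (rule alg)
  qed
  finally show ?thesis .
qed


lemma summable_ennreal[simp]: "(f::_ \<Rightarrow> ennreal) summable_on S"
  by (simp add: nonneg_summable_on_complete)

lemma infsum_ennreal_sup: "infsum (f::_\<Rightarrow>ennreal) A = (SUP F\<in>{F. finite F \<and> F\<subseteq>A}. sum f F)"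
  by (rule nonneg_infsum_complete) simp

lemma infsum_cmult_ennreal: "infsum (\<lambda>i. c * (f i::ennreal)) A = c * infsum f A"
  unfolding infsum_ennreal_sup SUP_mult_left_ennreal sum_distrib_left ..

lemma infsum_mono_ennreal: "(\<And>i. i \<in> A \<Longrightarrow> f i \<le> (g i::ennreal)) \<Longrightarrow> infsum f A \<le> infsum g A"
  by (rule infsum_mono) auto

lemma infsum_subset_ennreal: "A \<subseteq> B \<Longrightarrow> infsum (f::_\<Rightarrow>ennreal) A \<le> infsum f B"
  by (rule infsum_mono_neutral) auto

lemma infsum_entry_ennreal: "i \<in> A \<Longrightarrow> (f::_\<Rightarrow>ennreal) i \<le> infsum f A"
  using infsum_subset_ennreal[of "{i}" A f] by simp

lemma infsum_add_ennreal: "infsum (\<lambda>i. (f::_\<Rightarrow>ennreal) i + g i) A = infsum f A + infsum g A"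
  by (rule infsum_add) auto

definition lpn :: "real \<Rightarrow> 'i set \<Rightarrow> ('i \<Rightarrow> ennreal) \<Rightarrow> ennreal" where
  "lpn p I f = epowr (infsum (\<lambda>i. epowr (f i) p) I) (1/p)"

lemma lpn_mono: assumes "p > 0" "\<And>i. i \<in> I \<Longrightarrow> f i \<le> g i" shows "lpn p I f \<le> lpn p I g"
  unfolding lpn_def using assms
  by (intro epowr_mono infsum_mono_ennreal) auto

lemma lpn_zero[simp]: "lpn p I (\<lambda>_. 0) = 0"
  by (simp add: lpn_def)

lemma lpn_entry: assumes "p > 0" "i \<in> I" shows "f i \<le> lpn p I f"
proof -
  have "epowr (f i) p \<le> infsum (\<lambda>i. epowr (f i) p) I"
    using assms by (intro infsum_entry_ennreal)
  then have "epowr (epowr (f i) p) (1/p) \<le> epowr (infsum (\<lambda>i. epowr (f i) p) I) (1/p)"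
    by (rule epowr_mono) (use assms in simp)
  then show ?thesis unfolding lpn_def using assms(1) by simp
qed

lemma lpn_subset: assumes "p > 0" "I \<subseteq> J" shows "lpn p I f \<le> lpn p J f"
  unfolding lpn_def using assms by (intro epowr_mono infsum_subset_ennreal) auto

lemma lpn_reindex:
  assumes "p > 0" "S \<subseteq> I" "inj_on h S" "h ` S \<subseteq> J"
    and "\<And>e. e \<in> I \<Longrightarrow> f e \<le> (if e \<in> S then g (h e) else 0)"
  shows "lpn p I f \<le> lpn p J g"
proof -
  have "infsum (\<lambda>i. epowr (f i) p) I \<le> infsum (\<lambda>i. epowr (g (h i)) p) S"
  proof (rule infsum_mono_neutral)
    show "epowr (f x) p \<le> epowr (g (h x)) p" if "x \<in> I \<inter> S" for x
      using assms(5)[of x] that assms(1) by (auto intro: epowr_mono)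
    show "epowr (f x) p \<le> 0" if "x \<in> I - S" for x
      using assms(5)[of x] that assms(1) by auto
  qed auto
  also have "\<dots> = infsum (\<lambda>i. epowr (g i) p) (h ` S)"
    using infsum_reindex[OF assms(3), of "\<lambda>i. epowr (g i) p"] by (simp add: o_def)
  also have "\<dots> \<le> infsum (\<lambda>i. epowr (g i) p) J"
    using assms(4) by (rule infsum_subset_ennreal)
  finally show ?thesis unfolding lpn_def using assms(1) by (intro epowr_mono) auto
qed

lemma lpn_finite_sup:
  assumes "p > 0" "\<And>F. finite F \<Longrightarrow> F \<subseteq> I \<Longrightarrow> lpn p F f \<le> T"
  shows "lpn p I f \<le> T"
proof -
  have "infsum (\<lambda>i. epowr (f i) p) I \<le> epowr T p"
    unfolding infsum_ennreal_sup
  proof (rule SUP_least)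
    fix F assume "F \<in> {F. finite F \<and> F \<subseteq> I}"
    then have "lpn p F f \<le> T" using assms by auto
    then show "sum (\<lambda>i. epowr (f i) p) F \<le> epowr T p"
      unfolding lpn_def epowr_le_swap[OF assms(1)] using \<open>F \<in> _\<close> by simp
  qed
  then show ?thesis unfolding lpn_def epowr_le_swap[OF assms(1)] .
qed

lemma lpn_minkowski:
  assumes p: "p \<ge> 1"
  shows "lpn p I (\<lambda>i. f i + g i) \<le> lpn p I f + lpn p I g"
proof -
  have p0: "p > 0" using p by simp
  define SA where "SA = infsum (\<lambda>i. epowr (f i) p) I"
  define SB where "SB = infsum (\<lambda>i. epowr (g i) p) I"
  have lf: "lpn p I f = epowr SA (1/p)" and lg: "lpn p I g = epowr SB (1/p)"
    by (simp_all add: lpn_def SA_def SB_def)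
  show ?thesis
  proof (cases "SA = top \<or> SB = top")
    case True
    then show ?thesis unfolding lf lg using p0 by auto
  next
    case False
    then obtain a b where ab: "SA = ennreal a" "SB = ennreal b" "a \<ge> 0" "b \<ge> 0"
      by (metis ennreal_cases)
    have fin_f: "f i = ennreal (enn2real (f i))" if "i \<in> I" for i
    proof -
      have "epowr (f i) p \<le> SA" unfolding SA_def using that by (rule infsum_entry_ennreal)
      then have "f i \<noteq> top" using ab p0 by (auto simp: top_unique)
      then show ?thesis by (simp add: less_top)
    qed
    have fin_g: "g i = ennreal (enn2real (g i))" if "i \<in> I" for i
    proof -
      have "epowr (g i) p \<le> SB" unfolding SB_def using that by (rule infsum_entry_ennreal)
      then have "g i \<noteq> top" using ab p0 by (auto simp: top_unique)
      then show ?thesis by (simp add: less_top)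
    qed
    show ?thesis
    proof (cases "a = 0 \<or> b = 0")
      case True
      show ?thesis
      proof (cases "a = 0")
        case True
        have "f i = 0" if "i \<in> I" for i
        proof -
          have "epowr (f i) p \<le> SA" unfolding SA_def using that by (rule infsum_entry_ennreal)
          then show ?thesis using True ab p0 by simp
        qed
        then have "lpn p I (\<lambda>i. f i + g i) = lpn p I g" unfolding lpn_def
          by (intro arg_cong[where f="\<lambda>x. epowr x (1/p)"] infsum_cong) auto
        then show ?thesis by simp
      next
        case False
        then have "b = 0" using \<open>a = 0 \<or> b = 0\<close> by simp
        have "g i = 0" if "i \<in> I" for i
        proof -
          have "epowr (g i) p \<le> SB" unfolding SB_def using that by (rule infsum_entry_ennreal)
          then show ?thesis using \<open>b = 0\<close> ab p0 by simp
        qed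
        then have "lpn p I (\<lambda>i. f i + g i) = lpn p I f" unfolding lpn_def
          by (intro arg_cong[where f="\<lambda>x. epowr x (1/p)"] infsum_cong) auto
        then show ?thesis by simp
      qed
    next
      case False
      define A where "A = a powr (1/p)"
      define B where "B = b powr (1/p)"
      have AB: "A > 0" "B > 0" using False ab by (auto simp: A_def B_def)
      have Ap: "A powr p = a" "B powr p = b" using ab p0 by (simp_all add: A_def B_def powr_powr)
      define k1 where "k1 = (A+B) powr (p-1) * A powr (1-p)"
      define k2 where "k2 = (A+B) powr (p-1) * B powr (1-p)"
      have k: "k1 \<ge> 0" "k2 \<ge> 0" by (simp_all add: k1_def k2_def)
      have pt: "epowr (f i + g i) p \<le> ennreal k1 * epowr (f i) p + ennreal k2 * epowr (g i) p"
        if "i \<in> I" for i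
      proof -
        define F where "F = enn2real (f i)"
        define G where "G = enn2real (g i)"
        have FG: "f i = ennreal F" "g i = ennreal G" "F \<ge> 0" "G \<ge> 0"
          using fin_f[OF that] fin_g[OF that] by (simp_all add: F_def G_def)
        have "(F+G) powr p \<le> k1 * F powr p + k2 * G powr p"
          using conv_real[OF FG(3,4) AB p] by (simp add: k1_def k2_def algebra_simps)
        then show ?thesis using FG k
          by (simp add: ennreal_plus[symmetric] ennreal_mult[symmetric] del: ennreal_plus)
      qed
      have "infsum (\<lambda>i. epowr (f i + g i) p) I \<le>
            infsum (\<lambda>i. ennreal k1 * epowr (f i) p + ennreal k2 * epowr (g i) p) I"
        using pt by (rule infsum_mono_ennreal)
      also have "\<dots> = ennreal k1 * SA + ennreal k2 * SB"
        unfolding infsum_add_ennreal infsum_cmult_ennreal SA_def SB_def ..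
      also have "\<dots> = ennreal (k1 * a + k2 * b)"
        using ab k by (simp add: ennreal_plus[symmetric] ennreal_mult[symmetric] del: ennreal_plus)
      also have "k1 * a + k2 * b = (A+B) powr p"
      proof -
        have "k1 * a = (A+B) powr (p-1) * A" unfolding k1_def Ap(1)[symmetric] using AB
          by (simp add: mult.assoc powr_add[symmetric])
        moreover have "k2 * b = (A+B) powr (p-1) * B" unfolding k2_def Ap(2)[symmetric] using AB
          by (simp add: mult.assoc powr_add[symmetric])
        moreover have "(A+B) powr p = (A+B) powr (p-1) * (A+B)" using AB
          by (simp add: powr_diff)
        ultimately show ?thesis by (simp add: distrib_left)
      qed
      finally have "infsum (\<lambda>i. epowr (f i + g i) p) I \<le> epowr (ennreal (A+B)) p"
        using AB by (simp del: ennreal_plus)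
      then have "lpn p I (\<lambda>i. f i + g i) \<le> ennreal (A + B)"
        unfolding lpn_def epowr_le_swap[OF p0] .
      also have "ennreal (A+B) = lpn p I f + lpn p I g"
        unfolding lf lg ab using AB ab by (simp add: A_def B_def ennreal_plus)
      finally show ?thesis .
    qed
  qed
qed

lemma lpn_sum:
  assumes p: "p \<ge> 1" and "finite S"
  shows "lpn p I (\<lambda>i. \<Sum>m\<in>S. f m i) \<le> (\<Sum>m\<in>S. lpn p I (f m))"
  using assms(2)
proof (induction S rule: finite_induct)
  case empty
  then show ?case by simp
next
  case (insert x F)
  have "lpn p I (\<lambda>i. \<Sum>m\<in>insert x F. f m i) = lpn p I (\<lambda>i. f x i + (\<Sum>m\<in>F. f m i))"
    using insert by simp
  also have "\<dots> \<le> lpn p I (f x) + lpn p I (\<lambda>i. \<Sum>m\<in>F. f m i)"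
    by (rule lpn_minkowski[OF p])
  also have "\<dots> \<le> lpn p I (f x) + (\<Sum>m\<in>F. lpn p I (f m))"
    using insert by (simp add: add_left_mono)
  finally show ?case using insert by simp
qed

lemma lpn_const:
  assumes p: "p \<ge> 1" and "finite F" "e \<ge> 0" "\<And>i. i \<in> F \<Longrightarrow> f i \<le> ennreal e"
  shows "lpn p F f \<le> ennreal (real (card F) * e)"
proof -
  have p0: "p > 0" using p by simp
  have "infsum (\<lambda>i. epowr (f i) p) F = (\<Sum>i\<in>F. epowr (f i) p)" using assms by simp
  also have "\<dots> \<le> (\<Sum>i\<in>F. ennreal (e powr p))"
    using assms p0 by (intro sum_mono) (metis epowr_ennreal epowr_mono less_imp_le)
  also have "\<dots> = ennreal (real (card F) * e powr p)" using assms by (simp add: ennreal_mult ennreal_of_nat_eq_real_of_nat)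
  also have "\<dots> \<le> ennreal ((real (card F) * e) powr p)"
  proof (cases "card F = 0")
    case False
    then have "real (card F) \<le> real (card F) powr p"
      using p by (metis ge_one_powr_ge_zero less_one not_less of_nat_0_le_iff of_nat_less_1_iff powr_mono powr_one_gt_zero_iff zero_le_one)
    then show ?thesis using assms by (intro ennreal_leI) (simp add: powr_mult mult_right_mono)
  qed simp
  also have "\<dots> = epowr (ennreal (real (card F) * e)) p" using assms by simp
  finally show ?thesis unfolding lpn_def epowr_le_swap[OF p0] .
qed

lemma Wp_le: "is_matching A \<alpha> \<beta> K \<phi> z w \<Longrightarrow> Wp d A p \<alpha> \<beta> \<le> matching_cost d p \<alpha> \<beta> K \<phi> z w"
  unfolding Wp_def by (rule INF_lower2[of "(K, \<phi>, z, w)"]) auto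

lemma Wp_lessE:
  assumes "Wp d A p \<alpha> \<beta> < c"
  obtains K \<phi> z w where "is_matching A \<alpha> \<beta> K \<phi> z w" "matching_cost d p \<alpha> \<beta> K \<phi> z w < c"
  using assms unfolding Wp_def INF_less_iff by auto

definition mcv :: "('a \<Rightarrow> 'a \<Rightarrow> ennreal) \<Rightarrow> ('a \<times> nat) set \<Rightarrow> ('a \<times> nat \<Rightarrow> 'a \<times> nat) \<Rightarrow>
   ('a \<times> nat \<Rightarrow> 'a) \<Rightarrow> ('a \<times> nat \<Rightarrow> 'a) \<Rightarrow> ('a \<times> nat) + ('a \<times> nat) \<Rightarrow> ennreal" where
  "mcv d K \<phi> z w e = (case e of Inl i \<Rightarrow> if i \<in> K then d (fst i) (fst (\<phi> i)) else d (fst i) (z i)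
                         | Inr j \<Rightarrow> if j \<in> \<phi> ` K then 0 else d (w j) (fst j))"

lemma mcv_simps[simp]:
  "mcv d K \<phi> z w (Inl i) = (if i \<in> K then d (fst i) (fst (\<phi> i)) else d (fst i) (z i))"
  "mcv d K \<phi> z w (Inr j) = (if j \<in> \<phi> ` K then 0 else d (w j) (fst j))"
  by (simp_all add: mcv_def)

lemma infsum_Plus_ennreal:
  "infsum (f::_\<Rightarrow>ennreal) (A <+> B) = infsum (\<lambda>i. f (Inl i)) A + infsum (\<lambda>j. f (Inr j)) B"
proof -
  have "A <+> B = Inl ` A \<union> Inr ` B" by (auto simp: Sum_Type.Plus_def)
  then have "infsum f (A <+> B) = infsum f (Inl ` A) + infsum f (Inr ` B)"
    by (simp only:) (rule infsum_Un_disjoint, auto)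
  also have "\<dots> = infsum (\<lambda>i. f (Inl i)) A + infsum (\<lambda>j. f (Inr j)) B"
    by (simp add: infsum_reindex o_def)
  finally show ?thesis .
qed

lemma cost_lpn:
  assumes "is_matching A \<alpha> \<beta> K \<phi> z w"
  shows "matching_cost d p \<alpha> \<beta> K \<phi> z w = lpn p (fs_idx \<alpha> <+> fs_idx \<beta>) (mcv d K \<phi> z w)"
proof -
  have K: "K \<subseteq> fs_idx \<alpha>" using assms by (simp add: is_matching_def)
  have s1: "infsum (\<lambda>i. epowr (mcv d K \<phi> z w (Inl i)) p) (fs_idx \<alpha>) =
     (\<Sum>\<^sub>\<infinity>k\<in>K. epowr (d (fst k) (fst (\<phi> k))) p) + (\<Sum>\<^sub>\<infinity>i\<in>fs_idx \<alpha> - K. epowr (d (fst i) (z i)) p)"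
  proof -
    have "fs_idx \<alpha> = K \<union> (fs_idx \<alpha> - K)" using K by auto
    then have "infsum (\<lambda>i. epowr (mcv d K \<phi> z w (Inl i)) p) (fs_idx \<alpha>) =
      infsum (\<lambda>i. epowr (mcv d K \<phi> z w (Inl i)) p) K + infsum (\<lambda>i. epowr (mcv d K \<phi> z w (Inl i)) p) (fs_idx \<alpha> - K)"
      by (metis Diff_disjoint infsum_Un_disjoint summable_ennreal)
    also have "\<dots> = (\<Sum>\<^sub>\<infinity>k\<in>K. epowr (d (fst k) (fst (\<phi> k))) p) + (\<Sum>\<^sub>\<infinity>i\<in>fs_idx \<alpha> - K. epowr (d (fst i) (z i)) p)"
      by (intro arg_cong2[where f="(+)"] infsum_cong) auto
    finally show ?thesis .
  qed
  have s2: "infsum (\<lambda>j. epowr (mcv d K \<phi> z w (Inr j)) p) (fs_idx \<beta>) =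
     (\<Sum>\<^sub>\<infinity>j\<in>fs_idx \<beta> - \<phi> ` K. epowr (d (w j) (fst j)) p)"
    by (rule infsum_cong_neutral) auto
  show ?thesis unfolding matching_cost_def lpn_def infsum_Plus_ennreal s1 s2 ..
qed

lemma fs_idx_restrict[simp]: "fs_idx (fs_restrict \<alpha> S) = {i \<in> fs_idx \<alpha>. fst i \<in> S}"
  by (auto simp: fs_idx_def fs_restrict_def split: if_splits)

lemma fs_idx_zero[simp]: "fs_idx fs_zero = {}"
  by (simp add: fs_idx_def fs_zero_def)

lemma Dbar_idx: assumes "\<alpha> \<in> Dbar X A" "i \<in> fs_idx \<alpha>" shows "fst i \<in> X \<and> fst i \<notin> A"
proof -
  have "enat (snd i) < \<alpha> (fst i)" using assms(2) by (cases i) (simp add: fs_idx_def)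
  then have "\<alpha> (fst i) \<noteq> 0" by auto
  then show ?thesis using assms(1) by (auto simp: Dbar_def)
qed

lemma Dbar_idx_countable: "\<alpha> \<in> Dbar X A \<Longrightarrow> countable (fs_idx \<alpha>)"
proof -
  assume "\<alpha> \<in> Dbar X A"
  then have "countable ({x. \<alpha> x \<noteq> 0} \<times> (UNIV :: nat set))" by (simp add: Dbar_def)
  moreover have "fs_idx \<alpha> \<subseteq> {x. \<alpha> x \<noteq> 0} \<times> UNIV" by (auto simp: fs_idx_def)
  ultimately show ?thesis by (rule countable_subset[rotated])
qed

lemma emetric_tri: "emetric_on X d \<Longrightarrow> x \<in> X \<Longrightarrow> y \<in> X \<Longrightarrow> z \<in> X \<Longrightarrow> d x z \<le> d x y + d y z"
  by (simp add: emetric_on_def)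

lemma emetric_sym: "emetric_on X d \<Longrightarrow> x \<in> X \<Longrightarrow> y \<in> X \<Longrightarrow> d x y = d y x"
  by (simp add: emetric_on_def)

lemma emetric_refl: "emetric_on X d \<Longrightarrow> x \<in> X \<Longrightarrow> d x x = 0"
  by (simp add: emetric_on_def)

lemma compose_matching:
  assumes em: "emetric_on X d" and AX: "A \<subseteq> X" and p: "p \<ge> 1"
    and D: "\<alpha> \<in> Dbar X A" "\<beta> \<in> Dbar X A" "\<gamma> \<in> Dbar X A"
    and M1: "is_matching A \<alpha> \<beta> K1 \<phi>1 z1 w1" and M2: "is_matching A \<beta> \<gamma> K2 \<phi>2 z2 w2"
  shows "\<exists>K \<phi> z w. is_matching A \<alpha> \<gamma> K \<phi> z w \<and>
     matching_cost d p \<alpha> \<gamma> K \<phi> z w \<le> matching_cost d p \<alpha> \<beta> K1 \<phi>1 z1 w1 + matching_cost d p \<beta> \<gamma> K2 \<phi>2 z2 w2"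
proof -
  have p0: "p > 0" using p by simp
  define Ia Ib Ic where "Ia = fs_idx \<alpha>" "Ib = fs_idx \<beta>" "Ic = fs_idx \<gamma>"
  have m1: "K1 \<subseteq> Ia" "inj_on \<phi>1 K1" "\<phi>1 ` K1 \<subseteq> Ib" "z1 ` (Ia - K1) \<subseteq> A" "w1 ` (Ib - \<phi>1 ` K1) \<subseteq> A"
    using M1 by (auto simp: is_matching_def Ia_Ib_Ic_def)
  have m2: "K2 \<subseteq> Ib" "inj_on \<phi>2 K2" "\<phi>2 ` K2 \<subseteq> Ic" "z2 ` (Ib - K2) \<subseteq> A" "w2 ` (Ic - \<phi>2 ` K2) \<subseteq> A"
    using M2 by (auto simp: is_matching_def Ia_Ib_Ic_def)
  have Xa: "fst i \<in> X" if "i \<in> Ia" for i using Dbar_idx[OF D(1)] that by (auto simp: Ia_Ib_Ic_def)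
  have Xb: "fst i \<in> X" if "i \<in> Ib" for i using Dbar_idx[OF D(2)] that by (auto simp: Ia_Ib_Ic_def)
  have Xc: "fst i \<in> X" if "i \<in> Ic" for i using Dbar_idx[OF D(3)] that by (auto simp: Ia_Ib_Ic_def)
  define \<psi> where "\<psi> = inv_into K2 \<phi>2"
  have \<psi>: "\<psi> j \<in> K2" "\<phi>2 (\<psi> j) = j" if "j \<in> \<phi>2 ` K2" for j
    using that by (auto simp: \<psi>_def inv_into_into f_inv_into_f)
  have \<psi>2: "\<psi> (\<phi>2 k) = k" if "k \<in> K2" for k
    using that m2(2) by (simp add: \<psi>_def)
  define K where "K = {i \<in> K1. \<phi>1 i \<in> K2}"
  define \<phi> where "\<phi> = \<phi>2 \<circ> \<phi>1"
  define z where "z i = (if i \<in> K1 then z2 (\<phi>1 i) else z1 i)" for i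
  define w where "w j = (if j \<in> \<phi>2 ` K2 then w1 (\<psi> j) else w2 j)" for j
  have phiK: "j \<in> \<phi> ` K \<longleftrightarrow> j \<in> \<phi>2 ` K2 \<and> \<psi> j \<in> \<phi>1 ` K1" for j
  proof
    assume "j \<in> \<phi> ` K"
    then obtain i where "i \<in> K1" "\<phi>1 i \<in> K2" "j = \<phi>2 (\<phi>1 i)" by (auto simp: K_def \<phi>_def)
    then show "j \<in> \<phi>2 ` K2 \<and> \<psi> j \<in> \<phi>1 ` K1" using \<psi>2 by auto
  next
    assume "j \<in> \<phi>2 ` K2 \<and> \<psi> j \<in> \<phi>1 ` K1"
    then obtain i where i: "i \<in> K1" "\<psi> j = \<phi>1 i" "j \<in> \<phi>2 ` K2" by auto
    then have "\<phi>1 i \<in> K2" "j = \<phi>2 (\<phi>1 i)" using \<psi>[of j] by auto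
    then show "j \<in> \<phi> ` K" using i(1) unfolding K_def \<phi>_def by force
  qed
  have M: "is_matching A \<alpha> \<gamma> K \<phi> z w"
    unfolding is_matching_def
  proof (intro conjI)
    show "K \<subseteq> fs_idx \<alpha>" using m1 by (auto simp: K_def Ia_Ib_Ic_def)
    show "inj_on \<phi> K" unfolding \<phi>_def K_def using m1(2) m2(2)
      by (auto simp: inj_on_def)
    show "\<phi> ` K \<subseteq> fs_idx \<gamma>" using m2(3) by (auto simp: \<phi>_def K_def Ia_Ib_Ic_def)
    show "z ` (fs_idx \<alpha> - K) \<subseteq> A"
    proof
      fix y assume "y \<in> z ` (fs_idx \<alpha> - K)"
      then obtain i where i: "i \<in> Ia" "i \<notin> K" "y = z i" by (auto simp: Ia_Ib_Ic_def)
      show "y \<in> A"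
      proof (cases "i \<in> K1")
        case True
        then have "\<phi>1 i \<in> Ib - K2" using i m1(3) by (auto simp: K_def)
        then show ?thesis using m2(4) i True by (auto simp: z_def)
      next
        case False then show ?thesis using m1(4) i by (auto simp: z_def)
      qed
    qed
    show "w ` (fs_idx \<gamma> - \<phi> ` K) \<subseteq> A"
    proof
      fix y assume "y \<in> w ` (fs_idx \<gamma> - \<phi> ` K)"
      then obtain j where j: "j \<in> Ic" "j \<notin> \<phi> ` K" "y = w j" by (auto simp: Ia_Ib_Ic_def)
      show "y \<in> A"
      proof (cases "j \<in> \<phi>2 ` K2")
        case True
        have "\<psi> j \<in> K2" using \<psi> True by auto
        then have "\<psi> j \<in> Ib" using m2(1) by auto
        moreover have "\<psi> j \<notin> \<phi>1 ` K1" using j phiK True by auto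
        ultimately have "w1 (\<psi> j) \<in> A" using m1(5) by auto
        then show ?thesis using j True by (auto simp: w_def)
      next
        case False then show ?thesis using m2(5) j by (auto simp: w_def)
      qed
    qed
  qed
  define c1 where "c1 = mcv d K1 \<phi>1 z1 w1"
  define c2 where "c2 = mcv d K2 \<phi>2 z2 w2"
  define c where "c = mcv d K \<phi> z w"
  define u where "u e = (case e of Inl i \<Rightarrow> c1 (Inl i)
      | Inr j \<Rightarrow> if j \<in> \<phi>2 ` K2 \<and> \<psi> j \<notin> \<phi>1 ` K1 then c1 (Inr (\<psi> j)) else 0)" for e
  define v where "v e = (case e of Inl i \<Rightarrow> if i \<in> K1 then c2 (Inl (\<phi>1 i)) else 0
      | Inr j \<Rightarrow> if j \<notin> \<phi>2 ` K2 then c2 (Inr j) else if \<psi> j \<notin> \<phi>1 ` K1 then c2 (Inl (\<psi> j)) else 0)" for e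
  have cuv: "c e \<le> u e + v e" if "e \<in> Ia <+> Ic" for e
  proof (cases e)
    case (Inl i)
    then have i: "i \<in> Ia" using that by auto
    show ?thesis
    proof (cases "i \<in> K1")
      case True
      then have b: "\<phi>1 i \<in> Ib" using m1 by auto
      have ue: "u e = d (fst i) (fst (\<phi>1 i))" by (simp add: u_def c1_def Inl True)
      show ?thesis
      proof (cases "\<phi>1 i \<in> K2")
        case True
        then have "\<phi>2 (\<phi>1 i) \<in> Ic" using m2(3) by auto
        then have x3: "fst (\<phi>2 (\<phi>1 i)) \<in> X" using Xc by auto
        have ik: "i \<in> K" using \<open>i \<in> K1\<close> True by (simp add: K_def)
        have ce: "c e = d (fst i) (fst (\<phi>2 (\<phi>1 i)))" using ik by (simp add: c_def Inl \<phi>_def)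
        have ve: "v e = d (fst (\<phi>1 i)) (fst (\<phi>2 (\<phi>1 i)))" by (simp add: v_def c2_def Inl \<open>i \<in> K1\<close> True)
        show ?thesis unfolding ce ue ve by (rule emetric_tri[OF em Xa[OF i] Xb[OF b] x3])
      next
        case False
        then have zA: "z2 (\<phi>1 i) \<in> X" using m2 b AX by auto
        have ik: "i \<notin> K" using False by (simp add: K_def)
        have ce: "c e = d (fst i) (z2 (\<phi>1 i))" using ik \<open>i \<in> K1\<close> by (simp add: c_def Inl z_def)
        have ve: "v e = d (fst (\<phi>1 i)) (z2 (\<phi>1 i))" by (simp add: v_def c2_def Inl \<open>i \<in> K1\<close> False)
        show ?thesis unfolding ce ue ve by (rule emetric_tri[OF em Xa[OF i] Xb[OF b] zA])
      qed
    next
      case False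
      have ik: "i \<notin> K" using False by (simp add: K_def)
      have ce: "c e = d (fst i) (z1 i)" using ik False by (simp add: c_def Inl z_def)
      have ue: "u e = d (fst i) (z1 i)" using False by (simp add: u_def c1_def Inl)
      have ve: "v e = 0" using False by (simp add: v_def Inl)
      show ?thesis unfolding ce ue ve by simp
    qed
  next
    case (Inr j)
    then have j: "j \<in> Ic" using that by auto
    show ?thesis
    proof (cases "j \<in> \<phi> ` K")
      case True
      then show ?thesis using Inr by (simp add: c_def)
    next
      case False
      show ?thesis
      proof (cases "j \<in> \<phi>2 ` K2")
        case True
        then have nk: "\<psi> j \<notin> \<phi>1 ` K1" using False phiK by auto
        have k: "\<psi> j \<in> K2" "\<phi>2 (\<psi> j) = j" using \<psi> True by auto
        have kb: "\<psi> j \<in> Ib" using k m2 by auto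
        then have wA: "w1 (\<psi> j) \<in> X" using m1 nk AX by auto
        have ce: "c e = d (w1 (\<psi> j)) (fst j)" using False True by (simp add: c_def Inr w_def)
        have ue: "u e = d (w1 (\<psi> j)) (fst (\<psi> j))" using True nk by (simp add: u_def c1_def Inr)
        have ve: "v e = d (fst (\<psi> j)) (fst j)" using True nk k by (simp add: v_def c2_def Inr)
        show ?thesis unfolding ce ue ve by (rule emetric_tri[OF em wA Xb[OF kb] Xc[OF j]])
      next
        case False
        then show ?thesis using \<open>j \<notin> \<phi> ` K\<close> Inr by (simp add: c_def u_def v_def c2_def w_def)
      qed
    qed
  qed
  define S1 where "S1 = Inl ` Ia \<union> Inr ` {j \<in> Ic. j \<in> \<phi>2 ` K2 \<and> \<psi> j \<notin> \<phi>1 ` K1}"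
  define h1 where "h1 e = (case e of Inl i \<Rightarrow> Inl i | Inr j \<Rightarrow> Inr (\<psi> j))" for e :: "('a \<times> nat) + ('a \<times> nat)"
  define S2 where "S2 = Inl ` K1 \<union> Inr ` {j \<in> Ic. j \<notin> \<phi>2 ` K2 \<or> \<psi> j \<notin> \<phi>1 ` K1}"
  define h2 where "h2 e = (case e of Inl i \<Rightarrow> Inl (\<phi>1 i) | Inr j \<Rightarrow> if j \<notin> \<phi>2 ` K2 then Inr j else Inl (\<psi> j))"
    for e :: "('a \<times> nat) + ('a \<times> nat)"
  have lu: "lpn p (Ia <+> Ic) u \<le> lpn p (Ia <+> Ib) c1"
  proof (rule lpn_reindex[OF p0, of S1 _ h1])
    show "S1 \<subseteq> Ia <+> Ic" using m1 by (auto simp: S1_def)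
    show "inj_on h1 S1"
    proof (rule inj_onI)
      fix x y assume xy: "x \<in> S1" "y \<in> S1" "h1 x = h1 y"
      have injpsi: "a = b" if "a \<in> \<phi>2 ` K2" "b \<in> \<phi>2 ` K2" "\<psi> a = \<psi> b" for a b
        using that \<psi> by metis
      show "x = y"
      proof (cases x)
        case (Inl i) then show ?thesis using xy by (cases y) (simp_all add: h1_def)
      next
        case (Inr j)
        then have j: "j \<in> \<phi>2 ` K2" using xy(1) by (auto simp: S1_def)
        show ?thesis
        proof (cases y)
          case (Inl i') then show ?thesis using xy Inr by (simp add: h1_def)
        next
          case (Inr j')
          then have "j' \<in> \<phi>2 ` K2" using xy(2) by (auto simp: S1_def)
          moreover have "\<psi> j = \<psi> j'" using xy(3) Inr \<open>x = Inr j\<close> by (simp add: h1_def)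
          ultimately show ?thesis using injpsi[OF j] Inr \<open>x = Inr j\<close> by simp
        qed
      qed
    qed
    show "h1 ` S1 \<subseteq> Ia <+> Ib" using \<psi> \<psi>2 m2 by (auto simp: S1_def h1_def)
    show "u e \<le> (if e \<in> S1 then c1 (h1 e) else 0)" if "e \<in> Ia <+> Ic" for e
    proof (cases e)
      case (Inl i) then have "i \<in> Ia" using that by auto
      then show ?thesis using Inl by (simp add: u_def S1_def h1_def)
    next
      case (Inr j) then have "j \<in> Ic" using that by auto
      then show ?thesis using Inr by (simp add: u_def S1_def h1_def image_iff)
    qed
  qed
  have lv: "lpn p (Ia <+> Ic) v \<le> lpn p (Ib <+> Ic) c2"
  proof (rule lpn_reindex[OF p0, of S2 _ h2])
    show "S2 \<subseteq> Ia <+> Ic" using m1 by (auto simp: S2_def)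
    show "inj_on h2 S2"
    proof (rule inj_onI)
      fix x y assume xy: "x \<in> S2" "y \<in> S2" "h2 x = h2 y"
      have injpsi: "a = b" if "a \<in> \<phi>2 ` K2" "b \<in> \<phi>2 ` K2" "\<psi> a = \<psi> b" for a b
        using that \<psi> by metis
      have Sx: "(\<exists>i. x = Inl i \<and> i \<in> K1) \<or> (\<exists>j. x = Inr j \<and> (j \<notin> \<phi>2 ` K2 \<or> \<psi> j \<notin> \<phi>1 ` K1))"
        using xy(1) unfolding S2_def by blast
      have Sy: "(\<exists>i. y = Inl i \<and> i \<in> K1) \<or> (\<exists>j. y = Inr j \<and> (j \<notin> \<phi>2 ` K2 \<or> \<psi> j \<notin> \<phi>1 ` K1))"
        using xy(2) unfolding S2_def by blast
      show "x = y"
      proof (cases x)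
        case (Inl i)
        then have i: "i \<in> K1" using Sx by blast
        show ?thesis
        proof (cases y)
          case (Inl i')
          then have "i' \<in> K1" using Sy by blast
          moreover have "\<phi>1 i = \<phi>1 i'" using xy(3) Inl \<open>x = Inl i\<close> by (simp add: h2_def)
          ultimately show ?thesis using i m1(2) Inl \<open>x = Inl i\<close> by (simp add: inj_on_def)
        next
          case (Inr j')
          then have j': "j' \<notin> \<phi>2 ` K2 \<or> \<psi> j' \<notin> \<phi>1 ` K1" using Sy by blast
          have "h2 y = (if j' \<notin> \<phi>2 ` K2 then Inr j' else Inl (\<psi> j'))" using Inr by (simp add: h2_def)
          moreover have "h2 x = Inl (\<phi>1 i)" using \<open>x = Inl i\<close> by (simp add: h2_def)
          ultimately have False using xy(3) j' i by (auto split: if_splits)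
          then show ?thesis ..
        qed
      next
        case (Inr j)
        then have j: "j \<notin> \<phi>2 ` K2 \<or> \<psi> j \<notin> \<phi>1 ` K1" using Sx by blast
        have hx: "h2 x = (if j \<notin> \<phi>2 ` K2 then Inr j else Inl (\<psi> j))" using Inr by (simp add: h2_def)
        show ?thesis
        proof (cases y)
          case (Inl i')
          then have i': "i' \<in> K1" using Sy by blast
          have "h2 y = Inl (\<phi>1 i')" using Inl by (simp add: h2_def)
          then have False using xy(3) hx j i' by (auto split: if_splits)
          then show ?thesis ..
        next
          case (Inr j')
          have hy: "h2 y = (if j' \<notin> \<phi>2 ` K2 then Inr j' else Inl (\<psi> j'))" using Inr by (simp add: h2_def)
          have "j = j'"
          proof (cases "j \<in> \<phi>2 ` K2")
            case True
            then have "j' \<in> \<phi>2 ` K2" "\<psi> j = \<psi> j'" using xy(3) hx hy by (auto split: if_splits)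
            then show ?thesis using injpsi True by blast
          next
            case False
            then show ?thesis using xy(3) hx hy by (auto split: if_splits)
          qed
          then show ?thesis using Inr \<open>x = Inr j\<close> by simp
        qed
      qed
    qed
    show "h2 ` S2 \<subseteq> Ib <+> Ic"
    proof
      fix y assume "y \<in> h2 ` S2"
      then obtain x where x: "x \<in> S2" "y = h2 x" by blast
      show "y \<in> Ib <+> Ic"
      proof (cases x)
        case (Inl i)
        then have "i \<in> K1" using x by (auto simp: S2_def)
        then show ?thesis using x Inl m1(3) by (auto simp: h2_def)
      next
        case (Inr j)
        then have "j \<in> Ic" using x by (auto simp: S2_def)
        moreover have "\<psi> j \<in> Ib" if "j \<in> \<phi>2 ` K2" using \<psi>(1)[OF that] m2(1) by blast
        ultimately show ?thesis using x Inr by (auto simp: h2_def)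
      qed
    qed
    show "v e \<le> (if e \<in> S2 then c2 (h2 e) else 0)" if "e \<in> Ia <+> Ic" for e
    proof (cases e)
      case (Inl i) then show ?thesis using that by (simp add: v_def S2_def h2_def image_iff)
    next
      case (Inr j) then have "j \<in> Ic" using that by auto
      then show ?thesis using Inr by (simp add: v_def S2_def h2_def image_iff)
    qed
  qed
  have "matching_cost d p \<alpha> \<gamma> K \<phi> z w = lpn p (Ia <+> Ic) c"
    unfolding cost_lpn[OF M] by (simp add: c_def Ia_Ib_Ic_def)
  also have "\<dots> \<le> lpn p (Ia <+> Ic) (\<lambda>e. u e + v e)"
    using cuv p0 by (intro lpn_mono) auto
  also have "\<dots> \<le> lpn p (Ia <+> Ic) u + lpn p (Ia <+> Ic) v"
    by (rule lpn_minkowski[OF p])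
  also have "\<dots> \<le> lpn p (Ia <+> Ib) c1 + lpn p (Ib <+> Ic) c2"
    using lu lv by (rule add_mono)
  also have "\<dots> = matching_cost d p \<alpha> \<beta> K1 \<phi>1 z1 w1 + matching_cost d p \<beta> \<gamma> K2 \<phi>2 z2 w2"
    unfolding cost_lpn[OF M1] cost_lpn[OF M2] by (simp add: c1_def c2_def Ia_Ib_Ic_def)
  finally show ?thesis using M by blast
qed

lemma ennreal_less_add_eps: assumes "x < top" "e > 0" shows "x < x + ennreal e"
proof -
  obtain a where a: "x = ennreal a" "a \<ge> 0" using assms(1) by (cases x rule: ennreal_cases) auto
  then show ?thesis using assms(2) by (simp add: ennreal_plus[symmetric] ennreal_less_iff del: ennreal_plus)
qed

lemma Wp_triangle:
  assumes em: "emetric_on X d" and AX: "A \<subseteq> X" and p: "p \<ge> 1"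
    and D: "\<alpha> \<in> Dbar X A" "\<beta> \<in> Dbar X A" "\<gamma> \<in> Dbar X A"
  shows "Wp d A p \<alpha> \<gamma> \<le> Wp d A p \<alpha> \<beta> + Wp d A p \<beta> \<gamma>"
proof (rule ennreal_le_epsilon)
  fix e :: real assume fin: "Wp d A p \<alpha> \<beta> + Wp d A p \<beta> \<gamma> < top" and e: "0 < e"
  have f1: "Wp d A p \<alpha> \<beta> < top" and f2: "Wp d A p \<beta> \<gamma> < top" using fin by (auto simp: top_unique)
  have "Wp d A p \<alpha> \<beta> < Wp d A p \<alpha> \<beta> + ennreal (e/2)"
    using f1 e by (intro ennreal_less_add_eps) auto
  then obtain K1 \<phi>1 z1 w1 where M1: "is_matching A \<alpha> \<beta> K1 \<phi>1 z1 w1"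
    "matching_cost d p \<alpha> \<beta> K1 \<phi>1 z1 w1 < Wp d A p \<alpha> \<beta> + ennreal (e/2)" by (rule Wp_lessE)
  have "Wp d A p \<beta> \<gamma> < Wp d A p \<beta> \<gamma> + ennreal (e/2)"
    using f2 e by (intro ennreal_less_add_eps) auto
  then obtain K2 \<phi>2 z2 w2 where M2: "is_matching A \<beta> \<gamma> K2 \<phi>2 z2 w2"
    "matching_cost d p \<beta> \<gamma> K2 \<phi>2 z2 w2 < Wp d A p \<beta> \<gamma> + ennreal (e/2)" by (rule Wp_lessE)
  obtain K \<phi> z w where M: "is_matching A \<alpha> \<gamma> K \<phi> z w"
    "matching_cost d p \<alpha> \<gamma> K \<phi> z w \<le> matching_cost d p \<alpha> \<beta> K1 \<phi>1 z1 w1 + matching_cost d p \<beta> \<gamma> K2 \<phi>2 z2 w2"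
    using compose_matching[OF em AX p D M1(1) M2(1)] by blast
  have "Wp d A p \<alpha> \<gamma> \<le> matching_cost d p \<alpha> \<gamma> K \<phi> z w" by (rule Wp_le[OF M(1)])
  also have "\<dots> \<le> (Wp d A p \<alpha> \<beta> + ennreal (e/2)) + (Wp d A p \<beta> \<gamma> + ennreal (e/2))"
    using M(2) M1(2) M2(2) by (meson add_mono less_imp_le order_trans)
  also have "\<dots> = Wp d A p \<alpha> \<beta> + Wp d A p \<beta> \<gamma> + ennreal e"
    using e by (simp add: ennreal_plus[symmetric] del: ennreal_plus)
  finally show "Wp d A p \<alpha> \<gamma> \<le> Wp d A p \<alpha> \<beta> + Wp d A p \<beta> \<gamma> + ennreal e" .
qed

lemma einfdist_le: "a \<in> A \<Longrightarrow> einfdist d x A \<le> d x a"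
  unfolding einfdist_def by (rule INF_lower)

lemma einfdist_tri:
  assumes em: "emetric_on X d" and AX: "A \<subseteq> X" and xy: "x \<in> X" "y \<in> X"
  shows "einfdist d x A \<le> d x y + einfdist d y A"
proof (rule ennreal_le_epsilon)
  fix e :: real assume fin: "d x y + einfdist d y A < top" and e: "0 < e"
  then have "einfdist d y A < top" by (auto simp: top_unique)
  then have "einfdist d y A < einfdist d y A + ennreal e" using e by (rule ennreal_less_add_eps)
  then obtain a where a: "a \<in> A" "d y a < einfdist d y A + ennreal e"
    unfolding einfdist_def INF_less_iff by auto
  have "einfdist d x A \<le> d x a" by (rule einfdist_le[OF a(1)])
  also have "\<dots> \<le> d x y + d y a" using a AX xy by (intro emetric_tri[OF em]) auto
  also have "\<dots> \<le> d x y + (einfdist d y A + ennreal e)" using a(2) by (intro add_left_mono) simp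
  finally show "einfdist d x A \<le> d x y + einfdist d y A + ennreal e" by (simp add: add.assoc)
qed

lemma fin_add_lt: "(a::ennreal) < top \<Longrightarrow> b < top \<Longrightarrow> a + b < top"
  by (simp add: less_top)

lemma cost_entry_fin:
  assumes M: "is_matching A \<alpha> \<beta> K \<phi> z w" and p: "p \<ge> 1"
    and c: "matching_cost d p \<alpha> \<beta> K \<phi> z w < top" and e: "e \<in> fs_idx \<alpha> <+> fs_idx \<beta>"
  shows "mcv d K \<phi> z w e < top"
  using lpn_entry[of p e "fs_idx \<alpha> <+> fs_idx \<beta>" "mcv d K \<phi> z w"] p e c cost_lpn[OF M, of d p]
  by auto

lemma nbhd_top_iff: "x \<in> nbhd X d A top \<longleftrightarrow> x \<in> X \<and> einfdist d x A < top"
  by (simp add: nbhd_def)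

lemma Dbar_p_close:
  assumes mp: "metric_pair X d A" and p: "p \<ge> 1"
    and a: "\<alpha> \<in> Dbar X A" and b: "\<beta> \<in> Dbar_p X d A p" and W: "Wp d A p \<beta> \<alpha> < top"
  shows "\<alpha> \<in> Dbar_p X d A p"
proof -
  have p0: "p > 0" using p by simp
  have em: "emetric_on X d" and AX: "A \<subseteq> X" using mp by (auto simp: metric_pair_def eclosed_in_def)
  have bD: "\<beta> \<in> Dbar X A" and bu: "finite (fs_idx (upper_part X d A top \<beta>))"
    and bl: "Wp d A p (lower_part X d A top \<beta>) fs_zero < top" using b by (auto simp: Dbar_p_def)
  obtain K \<phi> z w where M: "is_matching A \<beta> \<alpha> K \<phi> z w" and Mc: "matching_cost d p \<beta> \<alpha> K \<phi> z w < top"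
    using W by (rule Wp_lessE)
  have m: "K \<subseteq> fs_idx \<beta>" "inj_on \<phi> K" "\<phi> ` K \<subseteq> fs_idx \<alpha>" "z ` (fs_idx \<beta> - K) \<subseteq> A"
    "w ` (fs_idx \<alpha> - \<phi> ` K) \<subseteq> A" using M by (auto simp: is_matching_def)
  have fin: "mcv d K \<phi> z w e < top" if "e \<in> fs_idx \<beta> <+> fs_idx \<alpha>" for e
    by (rule cost_entry_fin[OF M p Mc that])
  have Xa: "fst i \<in> X" "fst i \<notin> A" if "i \<in> fs_idx \<alpha>" for i using Dbar_idx[OF a that] by auto
  have Xb: "fst i \<in> X" "fst i \<notin> A" if "i \<in> fs_idx \<beta>" for i using Dbar_idx[OF bD that] by auto
  define \<psi> where "\<psi> = inv_into K \<phi>"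
  have \<psi>: "\<psi> i \<in> K" "\<phi> (\<psi> i) = i" if "i \<in> \<phi> ` K" for i
    using that by (auto simp: \<psi>_def inv_into_into f_inv_into_f)
  have \<psi>2: "\<psi> (\<phi> k) = k" if "k \<in> K" for k using that m(2) by (simp add: \<psi>_def)
  have unm: "einfdist d (fst i) A < top" if "i \<in> fs_idx \<alpha>" "i \<notin> \<phi> ` K" for i
  proof -
    have "d (w i) (fst i) < top" using fin[of "Inr i"] that by auto
    moreover have "w i \<in> A" using m(5) that by auto
    ultimately have "d (fst i) (w i) < top" using emetric_sym[OF em, of "w i" "fst i"] AX Xa[OF that(1)] by auto
    then show ?thesis using einfdist_le[OF \<open>w i \<in> A\<close>, of d "fst i"] by (simp add: le_less_trans)
  qed
  have mtch: "d (fst (\<psi> i)) (fst i) < top" if "i \<in> \<phi> ` K" for i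
  proof -
    have "\<psi> i \<in> fs_idx \<beta>" using \<psi>(1)[OF that] m(1) by auto
    then show ?thesis using fin[of "Inl (\<psi> i)"] \<psi>[OF that] by auto
  qed
  have upper: "finite (fs_idx (upper_part X d A top \<alpha>))"
  proof -
    have "fs_idx (upper_part X d A top \<alpha>) \<subseteq> \<phi> ` (K \<inter> fs_idx (upper_part X d A top \<beta>))"
    proof
      fix i assume "i \<in> fs_idx (upper_part X d A top \<alpha>)"
      then have i: "i \<in> fs_idx \<alpha>" "\<not> einfdist d (fst i) A < top"
        by (auto simp: upper_part_def nbhd_top_iff)
      then have iK: "i \<in> \<phi> ` K" using unm by blast
      have kb: "\<psi> i \<in> fs_idx \<beta>" using \<psi>(1)[OF iK] m(1) by auto
      have "\<not> einfdist d (fst (\<psi> i)) A < top"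
      proof
        assume "einfdist d (fst (\<psi> i)) A < top"
        moreover have "einfdist d (fst i) A \<le> d (fst i) (fst (\<psi> i)) + einfdist d (fst (\<psi> i)) A"
          using Xa[OF i(1)] Xb[OF kb] by (intro einfdist_tri[OF em AX])
        moreover have "d (fst i) (fst (\<psi> i)) < top"
          using mtch[OF iK] emetric_sym[OF em, of "fst i" "fst (\<psi> i)"] Xa[OF i(1)] Xb[OF kb] by simp
        ultimately show False using i(2) by (metis fin_add_lt le_less_trans)
      qed
      then have "\<psi> i \<in> fs_idx (upper_part X d A top \<beta>)"
        using kb Xb[OF kb] by (auto simp: upper_part_def nbhd_top_iff)
      then show "i \<in> \<phi> ` (K \<inter> fs_idx (upper_part X d A top \<beta>))"
        using \<psi>[OF iK] by (metis IntI image_eqI)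
    qed
    moreover have "finite (\<phi> ` (K \<inter> fs_idx (upper_part X d A top \<beta>)))" using bu by simp
    ultimately show ?thesis by (rule finite_subset)
  qed
  define la lb where "la = lower_part X d A top \<alpha>" "lb = lower_part X d A top \<beta>"
  have la_idx: "fs_idx la = {i \<in> fs_idx \<alpha>. einfdist d (fst i) A < top}"
    using Xa by (auto simp: la_lb_def lower_part_def nbhd_top_iff)
  have lb_idx: "fs_idx lb = {i \<in> fs_idx \<beta>. einfdist d (fst i) A < top}"
    using Xb by (auto simp: la_lb_def lower_part_def nbhd_top_iff)
  obtain KN \<phi>N zN wN where N: "is_matching A lb fs_zero KN \<phi>N zN wN"
    and Nc: "matching_cost d p lb fs_zero KN \<phi>N zN wN < top"
    using bl unfolding la_lb_def[symmetric] by (rule Wp_lessE)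
  have KN: "KN = {}" using N by (auto simp: is_matching_def)
  have zN: "zN ` fs_idx lb \<subseteq> A" using N KN by (auto simp: is_matching_def)
  define z' where "z' i = (if i \<in> \<phi> ` K then zN (\<psi> i) else w i)" for i
  have \<psi>lb: "\<psi> i \<in> fs_idx lb" if "i \<in> fs_idx la" "i \<in> \<phi> ` K" for i
  proof -
    have kb: "\<psi> i \<in> fs_idx \<beta>" using \<psi>(1)[OF that(2)] m(1) by auto
    have i: "i \<in> fs_idx \<alpha>" "einfdist d (fst i) A < top" using that(1) la_idx by auto
    have "einfdist d (fst (\<psi> i)) A \<le> d (fst (\<psi> i)) (fst i) + einfdist d (fst i) A"
      using Xa[OF i(1)] Xb[OF kb] by (intro einfdist_tri[OF em AX])
    then have "einfdist d (fst (\<psi> i)) A < top" using mtch[OF that(2)] i(2)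
      by (metis fin_add_lt le_less_trans)
    then show ?thesis using kb lb_idx by auto
  qed
  have M': "is_matching A la fs_zero {} \<phi> z' w"
    unfolding is_matching_def
  proof (intro conjI)
    show "z' ` (fs_idx la - {}) \<subseteq> A"
    proof
      fix y assume "y \<in> z' ` (fs_idx la - {})"
      then obtain i where i: "i \<in> fs_idx la" "y = z' i" by auto
      show "y \<in> A"
      proof (cases "i \<in> \<phi> ` K")
        case True
        have "\<psi> i \<in> fs_idx lb" using \<psi>lb i(1) True by blast
        then have "zN (\<psi> i) \<in> A" using zN by blast
        then show ?thesis using i(2) True by (simp add: z'_def)
      next
        case False
        have "i \<in> fs_idx \<alpha>" using i(1) la_idx by blast
        then have "w i \<in> A" using m(5) False by blast
        then show ?thesis using i(2) False by (simp add: z'_def)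
      qed
    qed
  qed auto
  define c' where "c' = mcv d {} \<phi> z' w"
  define cM where "cM = mcv d K \<phi> z w"
  define cN where "cN = mcv d KN \<phi>N zN wN"
  define u where "u e = (case e of Inl i \<Rightarrow> if i \<in> \<phi> ` K then cM (Inl (\<psi> i)) else cM (Inr i) | Inr j \<Rightarrow> 0)" for e :: "('a \<times> nat) + ('a \<times> nat)"
  define v where "v e = (case e of Inl i \<Rightarrow> if i \<in> \<phi> ` K then cN (Inl (\<psi> i)) else 0 | Inr j \<Rightarrow> 0)" for e :: "('a \<times> nat) + ('a \<times> nat)"
  have cuv: "c' e \<le> u e + v e" if "e \<in> fs_idx la <+> fs_idx fs_zero" for e
  proof -
    have "e \<in> Inl ` fs_idx la" using that by (auto simp: Sum_Type.Plus_def)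
    then obtain i where e: "e = Inl i" and i: "i \<in> fs_idx la" by blast
    have ia: "i \<in> fs_idx \<alpha>" using i la_idx by auto
    show ?thesis
    proof (cases "i \<in> \<phi> ` K")
      case True
      have kb: "\<psi> i \<in> fs_idx lb" using \<psi>lb[OF i True] .
      have kb': "\<psi> i \<in> fs_idx \<beta>" using \<psi>(1)[OF True] m(1) by auto
      have zA: "zN (\<psi> i) \<in> X" using zN kb AX by auto
      have "c' e = d (fst i) (zN (\<psi> i))" by (simp add: c'_def e z'_def True)
      also have "\<dots> \<le> d (fst i) (fst (\<psi> i)) + d (fst (\<psi> i)) (zN (\<psi> i))"
        by (rule emetric_tri[OF em Xa(1)[OF ia] Xb(1)[OF kb'] zA])
      also have "\<dots> = u e + v e"
        using True \<psi>[OF True] emetric_sym[OF em Xa(1)[OF ia] Xb(1)[OF kb']]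
        by (simp add: u_def v_def cM_def cN_def e KN)
      finally show ?thesis .
    next
      case False
      have wA: "w i \<in> X" using m(5) ia False AX by auto
      have "c' e = d (fst i) (w i)" by (simp add: c'_def e z'_def False)
      also have "\<dots> = u e + v e" using False emetric_sym[OF em Xa(1)[OF ia] wA]
        by (simp add: u_def v_def cM_def e)
      finally show ?thesis by simp
    qed
  qed
  have lu: "lpn p (fs_idx la <+> fs_idx fs_zero) u \<le> lpn p (fs_idx \<beta> <+> fs_idx \<alpha>) cM"
  proof (rule lpn_reindex[OF p0, of "fs_idx la <+> fs_idx fs_zero" _
        "\<lambda>e. case e of Inl i \<Rightarrow> if i \<in> \<phi> ` K then Inl (\<psi> i) else Inr i | Inr j \<Rightarrow> Inr j"])
    show "inj_on (\<lambda>e. case e of Inl i \<Rightarrow> if i \<in> \<phi> ` K then Inl (\<psi> i) else Inr i | Inr j \<Rightarrow> Inr j)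
       (fs_idx la <+> fs_idx fs_zero)"
    proof (rule inj_onI)
      fix x y assume xy: "x \<in> fs_idx la <+> fs_idx fs_zero" "y \<in> fs_idx la <+> fs_idx fs_zero"
        "(case x of Inl i \<Rightarrow> if i \<in> \<phi> ` K then Inl (\<psi> i) else Inr i | Inr j \<Rightarrow> Inr j) =
         (case y of Inl i \<Rightarrow> if i \<in> \<phi> ` K then Inl (\<psi> i) else Inr i | Inr j \<Rightarrow> Inr j)"
      obtain i where i: "x = Inl i" using xy(1) by auto
      obtain j where j: "y = Inl j" using xy(2) by auto
      have injpsi: "a = b" if "a \<in> \<phi> ` K" "b \<in> \<phi> ` K" "\<psi> a = \<psi> b" for a b
        using that \<psi> by metis
      have "i = j" using xy(3) injpsi unfolding i j by (auto split: if_splits)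
      then show "x = y" using i j by simp
    qed
    show "(\<lambda>e. case e of Inl i \<Rightarrow> if i \<in> \<phi> ` K then Inl (\<psi> i) else Inr i | Inr j \<Rightarrow> Inr j) `
       (fs_idx la <+> fs_idx fs_zero) \<subseteq> fs_idx \<beta> <+> fs_idx \<alpha>"
      using \<psi> \<psi>2 subsetD[OF m(1)] la_idx by auto
    show "u e \<le> (if e \<in> fs_idx la <+> fs_idx fs_zero
        then cM (case e of Inl i \<Rightarrow> if i \<in> \<phi> ` K then Inl (\<psi> i) else Inr i | Inr j \<Rightarrow> Inr j) else 0)"
      if "e \<in> fs_idx la <+> fs_idx fs_zero" for e
      using that by (auto simp: u_def)
  qed simp
  have lv: "lpn p (fs_idx la <+> fs_idx fs_zero) v \<le> lpn p (fs_idx lb <+> fs_idx fs_zero) cN"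
  proof (rule lpn_reindex[OF p0, of "Inl ` (fs_idx la \<inter> \<phi> ` K)" _ "\<lambda>e. case e of Inl i \<Rightarrow> Inl (\<psi> i) | Inr j \<Rightarrow> Inr j"])
    show "inj_on (\<lambda>e. case e of Inl i \<Rightarrow> Inl (\<psi> i) | Inr j \<Rightarrow> Inr j) (Inl ` (fs_idx la \<inter> \<phi> ` K))"
    proof -
      have injpsi: "a = b" if "a \<in> \<phi> ` K" "b \<in> \<phi> ` K" "\<psi> a = \<psi> b" for a b
        using that \<psi> by metis
      show ?thesis
      proof (rule inj_onI)
        fix x y assume xy: "x \<in> Inl ` (fs_idx la \<inter> \<phi> ` K)" "y \<in> Inl ` (fs_idx la \<inter> \<phi> ` K)"
          "(case x of Inl i \<Rightarrow> Inl (\<psi> i) | Inr j \<Rightarrow> Inr j) = (case y of Inl i \<Rightarrow> Inl (\<psi> i) | Inr j \<Rightarrow> Inr j)"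
        obtain i where i: "x = Inl i" "i \<in> \<phi> ` K" using xy(1) by blast
        obtain j where j: "y = Inl j" "j \<in> \<phi> ` K" using xy(2) by blast
        have "\<psi> i = \<psi> j" using xy(3) i j by simp
        then show "x = y" using injpsi[OF i(2) j(2)] i j by simp
      qed
    qed
    show "(\<lambda>e. case e of Inl i \<Rightarrow> Inl (\<psi> i) | Inr j \<Rightarrow> Inr j) ` Inl ` (fs_idx la \<inter> \<phi> ` K)
       \<subseteq> fs_idx lb <+> fs_idx fs_zero"
      unfolding Sum_Type.Plus_def using \<psi>lb by fastforce
    show "v e \<le> (if e \<in> Inl ` (fs_idx la \<inter> \<phi> ` K)
        then cN (case e of Inl i \<Rightarrow> Inl (\<psi> i) | Inr j \<Rightarrow> Inr j) else 0)"
      if "e \<in> fs_idx la <+> fs_idx fs_zero" for e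
      using that by (auto simp: v_def)
  qed auto
  have "matching_cost d p la fs_zero {} \<phi> z' w = lpn p (fs_idx la <+> fs_idx fs_zero) c'"
    unfolding cost_lpn[OF M'] c'_def ..
  also have "\<dots> \<le> lpn p (fs_idx la <+> fs_idx fs_zero) (\<lambda>e. u e + v e)"
    using cuv p0 by (intro lpn_mono) auto
  also have "\<dots> \<le> lpn p (fs_idx la <+> fs_idx fs_zero) u + lpn p (fs_idx la <+> fs_idx fs_zero) v"
    by (rule lpn_minkowski[OF p])
  also have "\<dots> \<le> lpn p (fs_idx \<beta> <+> fs_idx \<alpha>) cM + lpn p (fs_idx lb <+> fs_idx fs_zero) cN"
    using lu lv by (rule add_mono)
  also have "\<dots> = matching_cost d p \<beta> \<alpha> K \<phi> z w + matching_cost d p lb fs_zero KN \<phi>N zN wN"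
    unfolding cost_lpn[OF M] cost_lpn[OF N] cM_def cN_def ..
  also have "\<dots> < top" using Mc Nc by (rule fin_add_lt)
  finally have "Wp d A p la fs_zero < top" using Wp_le[OF M'] by (metis le_less_trans)
  then show ?thesis using a upper by (simp add: Dbar_p_def la_lb_def)
qed

definition ecard :: "'t set \<Rightarrow> enat" where
  "ecard S = (if finite S then enat (card S) else \<infinity>)"

lemma ecard_bij: assumes "countable S" shows "bij_betw (to_nat_on S) S {k. enat k < ecard S}"
proof (cases "finite S")
  case True
  then have "{k. enat k < ecard S} = {..<card S}" by (auto simp: ecard_def)
  then show ?thesis using to_nat_on_finite[OF True] by simp
next
  case False
  then have "{k. enat k < ecard S} = UNIV" by (auto simp: ecard_def)
  then show ?thesis using to_nat_on_infinite[OF assms False] by simp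
qed

lemma count_rep:
  fixes T :: "'t set" and f :: "'t \<Rightarrow> 'a"
  assumes T: "countable T"
  shows "bij_betw (\<lambda>t. (f t, to_nat_on {t'\<in>T. f t' = f t} t)) T (fs_idx (\<lambda>y. ecard {t\<in>T. f t = y}))"
proof -
  define S where "S y = {t\<in>T. f t = y}" for y
  have cS: "countable (S y)" for y using T by (auto simp: S_def intro: countable_subset)
  have b: "bij_betw (to_nat_on (S y)) (S y) {k. enat k < ecard (S y)}" for y by (rule ecard_bij[OF cS])
  show ?thesis unfolding bij_betw_def
  proof
    show "inj_on (\<lambda>t. (f t, to_nat_on {t' \<in> T. f t' = f t} t)) T"
    proof (rule inj_onI)
      fix x y assume xy: "x \<in> T" "y \<in> T" "(f x, to_nat_on {t' \<in> T. f t' = f x} x) = (f y, to_nat_on {t' \<in> T. f t' = f y} y)"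
      then have "f x = f y" by simp
      moreover have "x \<in> S (f x)" "y \<in> S (f x)" using xy(1,2) \<open>f x = f y\<close> by (simp_all add: S_def)
      moreover have "to_nat_on (S (f x)) x = to_nat_on (S (f x)) y" using xy(3) \<open>f x = f y\<close> by (simp add: S_def)
      ultimately show "x = y" using b[of "f x"] unfolding bij_betw_def inj_on_def by blast
    qed
    show "(\<lambda>t. (f t, to_nat_on {t' \<in> T. f t' = f t} t)) ` T = fs_idx (\<lambda>y. ecard {t \<in> T. f t = y})"
    proof
      show "(\<lambda>t. (f t, to_nat_on {t' \<in> T. f t' = f t} t)) ` T \<subseteq> fs_idx (\<lambda>y. ecard {t \<in> T. f t = y})"
      proof
        fix x assume "x \<in> (\<lambda>t. (f t, to_nat_on {t' \<in> T. f t' = f t} t)) ` T"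
        then obtain t where t: "t \<in> T" "x = (f t, to_nat_on (S (f t)) t)" by (auto simp: S_def)
        then have "t \<in> S (f t)" by (simp add: S_def)
        then have "enat (to_nat_on (S (f t)) t) < ecard (S (f t))" using b[of "f t"] by (auto simp: bij_betw_def)
        then show "x \<in> fs_idx (\<lambda>y. ecard {t \<in> T. f t = y})" using t by (simp add: fs_idx_def S_def)
      qed
      show "fs_idx (\<lambda>y. ecard {t \<in> T. f t = y}) \<subseteq> (\<lambda>t. (f t, to_nat_on {t' \<in> T. f t' = f t} t)) ` T"
      proof
        fix x assume "x \<in> fs_idx (\<lambda>y. ecard {t \<in> T. f t = y})"
        then obtain y k where x: "x = (y, k)" "enat k < ecard (S y)" by (cases x) (auto simp: fs_idx_def S_def)
        then have "k \<in> to_nat_on (S y) ` S y" using b[of y] unfolding bij_betw_def by blast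
        then obtain t where t: "t \<in> S y" "to_nat_on (S y) t = k" by blast
        then have "f t = y" "t \<in> T" by (auto simp: S_def)
        then show "x \<in> (\<lambda>t. (f t, to_nat_on {t' \<in> T. f t' = f t} t)) ` T"
          using t x by (auto simp: S_def image_iff intro!: bexI[of _ t])
      qed
    qed
  qed
qed

locale chain =
  fixes X :: "'a set" and d :: "'a \<Rightarrow> 'a \<Rightarrow> ennreal" and A :: "'a set" and p :: real
    and \<beta> :: "nat \<Rightarrow> 'a fsum" and K :: "nat \<Rightarrow> ('a \<times> nat) set"
    and \<phi> :: "nat \<Rightarrow> 'a \<times> nat \<Rightarrow> 'a \<times> nat" and z w :: "nat \<Rightarrow> 'a \<times> nat \<Rightarrow> 'a"
  assumes mp: "metric_pair X d A" and p: "p \<ge> 1" and comp: "ecomplete_on X d"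
    and D: "\<And>m. \<beta> m \<in> Dbar X A"
    and M: "\<And>m. is_matching A (\<beta> m) (\<beta> (Suc m)) (K m) (\<phi> m) (z m) (w m)"
    and C: "\<And>m. matching_cost d p (\<beta> m) (\<beta> (Suc m)) (K m) (\<phi> m) (z m) (w m) \<le> ennreal ((1/2)^m)"
begin

abbreviation I where "I m \<equiv> fs_idx (\<beta> m)"
abbreviation c where "c m \<equiv> mcv d (K m) (\<phi> m) (z m) (w m)"

lemma p0: "p > 0" using p by simp
lemma em: "emetric_on X d" using mp by (simp add: metric_pair_def)
lemma AX: "A \<subseteq> X" using mp by (simp add: metric_pair_def eclosed_in_def)

lemma Mm: "K m \<subseteq> I m" "inj_on (\<phi> m) (K m)" "\<phi> m ` K m \<subseteq> I (Suc m)"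
  "z m ` (I m - K m) \<subseteq> A" "w m ` (I (Suc m) - \<phi> m ` K m) \<subseteq> A"
  using M[of m] by (auto simp: is_matching_def)

lemma IX: "q \<in> I m \<Longrightarrow> fst q \<in> X" and IA: "q \<in> I m \<Longrightarrow> fst q \<notin> A"
  using Dbar_idx[OF D] by auto

lemma c_le: "e \<in> I m <+> I (Suc m) \<Longrightarrow> c m e \<le> ennreal ((1/2)^m)"
  using lpn_entry[OF p0, of e "I m <+> I (Suc m)" "c m"] C[of m] cost_lpn[OF M[of m], of d p] by simp

lemma lpn_c: "lpn p (I m <+> I (Suc m)) (c m) \<le> ennreal ((1/2)^m)"
  using C[of m] cost_lpn[OF M[of m], of d p] by simp

fun path :: "nat \<Rightarrow> 'a \<times> nat \<Rightarrow> nat \<Rightarrow> ('a \<times> nat) option" where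
  "path j i 0 = Some i"
| "path j i (Suc n) = (case path j i n of None \<Rightarrow> None
     | Some q \<Rightarrow> if q \<in> K (j + n) then Some (\<phi> (j + n) q) else None)"

lemma path_SucE:
  assumes "path j i (Suc n) = Some q'"
  obtains q where "path j i n = Some q" "q \<in> K (j + n)" "q' = \<phi> (j + n) q"
  using assms by (cases "path j i n") (auto split: if_splits)

lemma path_Suc_Some: "path j i n = Some q \<Longrightarrow> q \<in> K (j + n) \<Longrightarrow> path j i (Suc n) = Some (\<phi> (j + n) q)"
  by simp

lemma path_Suc_None: "path j i n = Some q \<Longrightarrow> q \<notin> K (j + n) \<Longrightarrow> path j i (Suc n) = None"
  by simp

lemma path_in: "i \<in> I j \<Longrightarrow> path j i n = Some q \<Longrightarrow> q \<in> I (j + n)"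
proof (induction n arbitrary: q)
  case 0 then show ?case by simp
next
  case (Suc n)
  from Suc.prems(2) obtain q0 where q0: "path j i n = Some q0" "q0 \<in> K (j + n)" "q = \<phi> (j + n) q0"
    by (rule path_SucE)
  then show ?case using Mm(3)[of "j + n"] by auto
qed

lemma path_None_mono: "path j i n = None \<Longrightarrow> n \<le> m \<Longrightarrow> path j i m = None"
proof (induction m)
  case 0 then show ?case by simp
next
  case (Suc m)
  then show ?case by (cases "n = Suc m") auto
qed

lemma path_defined_le: assumes "path j i m \<noteq> None" "n \<le> m" shows "path j i n \<noteq> None"
proof
  assume "path j i n = None"
  then have "path j i m = None" using assms(2) by (rule path_None_mono)
  then show False using assms(1) by simp
qed

lemma path_inj: "i \<in> I j \<Longrightarrow> i' \<in> I j \<Longrightarrow> path j i n = Some q \<Longrightarrow> path j i' n = Some q \<Longrightarrow> i = i'"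
proof (induction n arbitrary: q)
  case 0 then show ?case by simp
next
  case (Suc n)
  obtain q0 where q0: "path j i n = Some q0" "q0 \<in> K (j + n)" "q = \<phi> (j + n) q0"
    using Suc.prems(3) by (rule path_SucE)
  obtain q1 where q1: "path j i' n = Some q1" "q1 \<in> K (j + n)" "q = \<phi> (j + n) q1"
    using Suc.prems(4) by (rule path_SucE)
  have "q0 = q1" using q0 q1 Mm(2)[of "j + n"] by (auto simp: inj_on_def)
  then show ?case using Suc.IH[OF Suc.prems(1,2)] q0 q1 by simp
qed

lemma path_shift: "path j i (a + b) = (case path j i a of None \<Rightarrow> None | Some q \<Rightarrow> path (j + a) q b)"
proof (induction b)
  case 0 then show ?case by (cases "path j i a") auto
next
  case (Suc b)
  show ?case
  proof (cases "path j i a")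
    case None
    then show ?thesis using path_None_mono[OF None, of "a + Suc b"] by simp
  next
    case (Some q)
    then have ih: "path j i (a + b) = path (j + a) q b" using Suc.IH by simp
    have "path j i (a + Suc b) = path j i (Suc (a + b))" by simp
    also have "\<dots> = path (j + a) q (Suc b)" by (simp only: path.simps ih add.assoc)
    finally show ?thesis using Some by simp
  qed
qed

lemma path_shift_Some: "path j i a = Some q \<Longrightarrow> path j i (a + b) = path (j + a) q b"
  using path_shift[of j i a b] by simp

definition born :: "nat \<Rightarrow> 'a \<times> nat \<Rightarrow> bool" where
  "born s i \<longleftrightarrow> i \<in> I s \<and> (s = 0 \<or> i \<notin> \<phi> (s - 1) ` K (s - 1))"

lemma origin_ex: "q \<in> I m \<Longrightarrow> \<exists>s i0. s \<le> m \<and> born s i0 \<and> path s i0 (m - s) = Some q"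
proof (induction m arbitrary: q)
  case 0
  then show ?case by (intro exI[of _ 0] exI[of _ q]) (simp add: born_def)
next
  case (Suc m)
  show ?case
  proof (cases "q \<in> \<phi> m ` K m")
    case True
    then obtain q0 where q0: "q0 \<in> K m" "q = \<phi> m q0" by auto
    then have "q0 \<in> I m" using Mm(1) by auto
    then obtain s i0 where s: "s \<le> m" "born s i0" "path s i0 (m - s) = Some q0" using Suc.IH by blast
    have "path s i0 (Suc (m - s)) = Some (\<phi> (s + (m - s)) q0)"
      using s(3) q0(1) s(1) by simp
    then have "path s i0 (Suc m - s) = Some q" using s(1) q0 by (simp add: Suc_diff_le)
    then show ?thesis using s by (intro exI[of _ s] exI[of _ i0]) simp
  next
    case False
    then show ?thesis using Suc.prems by (intro exI[of _ "Suc m"] exI[of _ q]) (simp add: born_def)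
  qed
qed

lemma origin_uniq_le:
  assumes "born s i0" "born s' i0'" "s \<le> s'" "s' \<le> m"
    and "path s i0 (m - s) = Some q" "path s' i0' (m - s') = Some q"
  shows "s = s' \<and> i0 = i0'"
proof -
  have eq: "m - s = (s' - s) + (m - s')" using assms(3,4) by simp
  obtain q' where q': "path s i0 (s' - s) = Some q'"
    using assms(5) unfolding eq path_shift[of s i0 "s' - s" "m - s'"] by (cases "path s i0 (s' - s)") auto
  have "path s' q' (m - s') = Some q"
    using assms(5) unfolding eq path_shift_Some[OF q'] using assms(3) by simp
  moreover have "q' \<in> I s'" using path_in[OF _ q'] assms(1,3) by (simp add: born_def)
  moreover have "i0' \<in> I s'" using assms(2) by (simp add: born_def)
  ultimately have "q' = i0'" using path_inj assms(6) by blast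
  show ?thesis
  proof (cases "s' - s")
    case 0
    then show ?thesis using q' \<open>q' = i0'\<close> assms(3) by simp
  next
    case (Suc n)
    have "path s i0 (Suc n) = Some q'" using q' Suc by simp
    then obtain q0 where "path s i0 n = Some q0" "q0 \<in> K (s + n)" "q' = \<phi> (s + n) q0"
      by (rule path_SucE)
    moreover have "s + n = s' - 1" "s' \<noteq> 0" using Suc by auto
    ultimately have "i0' \<in> \<phi> (s' - 1) ` K (s' - 1)" using \<open>q' = i0'\<close> by auto
    then show ?thesis using assms(2) \<open>s' \<noteq> 0\<close> by (simp add: born_def)
  qed
qed

lemma origin_uniq:
  assumes "born s i0" "born s' i0'" "s \<le> m" "s' \<le> m"
    and "path s i0 (m - s) = Some q" "path s' i0' (m - s') = Some q"
  shows "s = s' \<and> i0 = i0'"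
proof (cases "s \<le> s'")
  case True then show ?thesis using origin_uniq_le assms by blast
next
  case False then show ?thesis using origin_uniq_le[of s' i0' s i0 m q] assms by auto
qed

definition orig :: "nat \<Rightarrow> 'a \<times> nat \<Rightarrow> nat \<times> ('a \<times> nat)" where
  "orig m q = (THE t. fst t \<le> m \<and> born (fst t) (snd t) \<and> path (fst t) (snd t) (m - fst t) = Some q)"

lemma orig: assumes "q \<in> I m"
  shows "fst (orig m q) \<le> m" "born (fst (orig m q)) (snd (orig m q))"
    "path (fst (orig m q)) (snd (orig m q)) (m - fst (orig m q)) = Some q"
proof -
  obtain s i0 where s: "s \<le> m" "born s i0" "path s i0 (m - s) = Some q" using origin_ex[OF assms] by blast
  have "\<exists>!t. fst t \<le> m \<and> born (fst t) (snd t) \<and> path (fst t) (snd t) (m - fst t) = Some q"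
  proof
    show "fst (s, i0) \<le> m \<and> born (fst (s, i0)) (snd (s, i0)) \<and> path (fst (s, i0)) (snd (s, i0)) (m - fst (s, i0)) = Some q"
      using s by simp
    show "t = (s, i0)" if "fst t \<le> m \<and> born (fst t) (snd t) \<and> path (fst t) (snd t) (m - fst t) = Some q" for t
      using origin_uniq[of "fst t" "snd t" s i0 m q] that s by (cases t) auto
  qed
  then have "fst (orig m q) \<le> m \<and> born (fst (orig m q)) (snd (orig m q)) \<and> path (fst (orig m q)) (snd (orig m q)) (m - fst (orig m q)) = Some q"
    unfolding orig_def by (rule theI')
  then show "fst (orig m q) \<le> m" "born (fst (orig m q)) (snd (orig m q))"
    "path (fst (orig m q)) (snd (orig m q)) (m - fst (orig m q)) = Some q" by blast+
qed

lemma orig_eq: assumes "born s i0" "s \<le> m" "path s i0 (m - s) = Some q"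
  shows "orig m q = (s, i0)"
proof -
  have q: "q \<in> I m" using path_in[OF _ assms(3)] assms by (simp add: born_def)
  show ?thesis using origin_uniq[OF orig(2)[OF q] assms(1) orig(1)[OF q] assms(2) orig(3)[OF q] assms(3)]
    by (cases "orig m q") simp
qed

end

lemma geom_half: "(\<Sum>m<k. (1/2::real)^(a+m)) = 2*(1/2)^a - 2*(1/2)^(a+k)"
  by (induction k) (simp_all add: power_add)

lemma geom_half_le: "(\<Sum>m<k. (1/2::real)^(a+m)) \<le> 2*(1/2)^a"
  unfolding geom_half by simp

lemma half_pow_small: assumes "(e::real) > 0" obtains N where "2*(1/2::real)^N < e"
proof -
  obtain N where "(1/2::real)^N < e/2" using real_arch_pow_inv[of "e/2" "1/2"] assms by auto
  then show ?thesis using that[of N] by simp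
qed

definition econv :: "('a \<Rightarrow> 'a \<Rightarrow> ennreal) \<Rightarrow> (nat \<Rightarrow> 'a) \<Rightarrow> 'a \<Rightarrow> bool" where
  "econv d f l \<longleftrightarrow> (\<forall>e>0. \<exists>N. \<forall>n\<ge>N. d (f n) l < e)"

context chain begin

definition alive :: "nat \<Rightarrow> 'a \<times> nat \<Rightarrow> bool" where "alive s i \<longleftrightarrow> (\<forall>n. path s i n \<noteq> None)"
lemma alive_path: assumes "alive s i" obtains q where "path s i n = Some q"
proof -
  have "path s i n \<noteq> None" using assms unfolding alive_def by (rule spec)
  then have "\<exists>q. path s i n = Some q" by simp
  then show ?thesis using that by blast
qed

definition pt :: "nat \<Rightarrow> 'a \<times> nat \<Rightarrow> nat \<Rightarrow> 'a" where "pt s i n = fst (the (path s i n))"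

lemma path_step_cost:
  assumes "i \<in> I s" "path s i n = Some q" "path s i (Suc n) = Some q'"
  shows "d (fst q) (fst q') = c (s + n) (Inl q)" "q \<in> K (s + n)" "q' = \<phi> (s + n) q"
proof -
  obtain q0 where q0: "path s i n = Some q0" "q0 \<in> K (s + n)" "q' = \<phi> (s + n) q0"
    using assms(3) by (rule path_SucE)
  then have "q0 = q" using assms(2) by simp
  then show "d (fst q) (fst q') = c (s + n) (Inl q)" "q \<in> K (s + n)" "q' = \<phi> (s + n) q"
    using q0 by simp_all
qed

lemma chain_dist:
  assumes i: "i \<in> I s" and def: "path s i (n + k) \<noteq> None"
  shows "d (pt s i n) (pt s i (n + k)) \<le> (\<Sum>m<k. c (s + n + m) (Inl (the (path s i (n + m)))))"
  using def
proof (induction k)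
  case 0
  have "path s i n \<noteq> None" using 0 by simp
  then obtain q where q: "path s i n = Some q" by auto
  have "fst q \<in> X" using path_in[OF i q] IX by blast
  then show ?case using q emetric_refl[OF em] by (simp add: pt_def)
next
  case (Suc k)
  obtain q' where q': "path s i (Suc (n + k)) = Some q'" using Suc.prems by auto
  have "path s i (n + k) \<noteq> None" using path_defined_le[of s i "Suc (n + k)" "n + k"] q' by simp
  then obtain q where q: "path s i (n + k) = Some q" by auto
  have "path s i n \<noteq> None" using path_defined_le[of s i "n + k" n] q by simp
  then obtain q0 where q0: "path s i n = Some q0" by auto
  have X0: "fst q0 \<in> X" using path_in[OF i q0] IX by blast
  have X1: "fst q \<in> X" using path_in[OF i q] IX by blast
  have X2: "fst q' \<in> X" using path_in[OF i q'] IX by blast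
  have "d (pt s i n) (pt s i (n + Suc k)) = d (fst q0) (fst q')" using q0 q' by (simp add: pt_def)
  also have "\<dots> \<le> d (fst q0) (fst q) + d (fst q) (fst q')" by (rule emetric_tri[OF em X0 X1 X2])
  also have "d (fst q0) (fst q) \<le> (\<Sum>m<k. c (s + n + m) (Inl (the (path s i (n + m)))))"
    using Suc.IH q q0 by (simp add: pt_def)
  also have "d (fst q) (fst q') = c (s + n + k) (Inl (the (path s i (n + k))))"
    using path_step_cost(1)[OF i q q'] q by (simp add: add.assoc)
  finally show ?case by (simp add: add.commute)
qed

lemma c_path_le: assumes "i \<in> I s" "path s i m = Some q" shows "c (s + m) (Inl q) \<le> ennreal ((1/2)^(s+m))"
proof -
  have "q \<in> I (s + m)" using path_in[OF assms] .
  then show ?thesis by (intro c_le) auto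
qed

lemma chain_dist_geom:
  assumes i: "i \<in> I s" and def: "path s i (n + k) \<noteq> None"
  shows "d (pt s i n) (pt s i (n + k)) \<le> ennreal (2 * (1/2)^(s+n))"
proof -
  have "d (pt s i n) (pt s i (n + k)) \<le> (\<Sum>m<k. c (s + n + m) (Inl (the (path s i (n + m)))))"
    by (rule chain_dist[OF assms])
  also have "\<dots> \<le> (\<Sum>m<k. ennreal ((1/2)^((s + n) + m)))"
  proof (rule sum_mono)
    fix m assume "m \<in> {..<k}"
    then have "path s i (n + m) \<noteq> None" using path_defined_le[OF def, of "n + m"] by simp
    then obtain q where q: "path s i (n + m) = Some q" by auto
    show "c (s + n + m) (Inl (the (path s i (n + m)))) \<le> ennreal ((1/2)^((s + n) + m))"
      using c_path_le[OF i q] q by (simp add: add.assoc)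
  qed
  also have "\<dots> = ennreal (\<Sum>m<k. (1/2)^((s + n) + m))" by (simp add: sum_ennreal)
  also have "\<dots> \<le> ennreal (2 * (1/2)^(s+n))" by (intro ennreal_leI geom_half_le)
  finally show ?thesis .
qed

lemma pt_X: "i \<in> I s \<Longrightarrow> path s i n \<noteq> None \<Longrightarrow> pt s i n \<in> X"
  using path_in[of i s n] IX by (auto simp: pt_def)

lemma inf_cauchy:
  assumes i: "i \<in> I s" and inf: "alive s i"
  shows "\<forall>e>0. \<exists>N. \<forall>m\<ge>N. \<forall>n\<ge>N. d (pt s i m) (pt s i n) < e"
proof (intro allI impI)
  fix e :: ennreal assume e: "e > 0"
  define r where "r = (if e = top then 1 else enn2real e)"
  have r: "r > 0" "ennreal r \<le> e" using e by (auto simp: r_def enn2real_positive_iff less_top)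
  obtain N where N: "2*(1/2::real)^N < r" using half_pow_small[OF r(1)] by blast
  have bound: "d (pt s i m) (pt s i n) < e" if "m \<le> n" "N \<le> m" for m n
  proof -
    have "d (pt s i m) (pt s i (m + (n - m))) \<le> ennreal (2 * (1/2)^(s+m))"
      using inf i by (intro chain_dist_geom) (auto simp: alive_def)
    also have "2 * (1/2::real)^(s+m) \<le> 2 * (1/2)^N"
      using that by (simp add: power_decreasing)
    then have "ennreal (2 * (1/2)^(s+m)) \<le> ennreal (2*(1/2)^N)" by (rule ennreal_leI)
    also have "\<dots> < ennreal r" by (rule ennreal_lessI) (use N r in auto)
    also have "\<dots> \<le> e" by (rule r(2))
    finally show ?thesis using that by simp
  qed
  show "\<exists>N. \<forall>m\<ge>N. \<forall>n\<ge>N. d (pt s i m) (pt s i n) < e"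
  proof (intro exI allI impI)
    fix m n assume mn: "N \<le> m" "N \<le> n"
    show "d (pt s i m) (pt s i n) < e"
    proof (cases "m \<le> n")
      case True then show ?thesis using bound mn by simp
    next
      case False
      then have "d (pt s i n) (pt s i m) < e" using bound mn by simp
      moreover have "pt s i m \<in> X" "pt s i n \<in> X" using pt_X i inf by (auto simp: alive_def)
      ultimately show ?thesis using emetric_sym[OF em] by metis
    qed
  qed
qed

definition lim :: "nat \<Rightarrow> 'a \<times> nat \<Rightarrow> 'a" where
  "lim s i = (SOME l. l \<in> X \<and> econv d (pt s i) l)"

lemma lim: assumes "i \<in> I s" "alive s i" shows "lim s i \<in> X" "econv d (pt s i) (lim s i)"
proof -
  have seq: "\<forall>n. pt s i n \<in> X" using pt_X[OF assms(1)] assms(2) by (simp add: alive_def)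
  have imp: "(\<forall>n. pt s i n \<in> X) \<and> (\<forall>e>0. \<exists>N. \<forall>m\<ge>N. \<forall>n\<ge>N. d (pt s i m) (pt s i n) < e) \<longrightarrow>
     (\<exists>l\<in>X. \<forall>e>0. \<exists>N. \<forall>n\<ge>N. d (pt s i n) l < e)"
    using comp unfolding ecomplete_on_def by (rule spec)
  have "\<exists>l\<in>X. \<forall>e>0. \<exists>N. \<forall>n\<ge>N. d (pt s i n) l < e"
    by (rule HOL.mp[OF imp]) (use seq inf_cauchy[OF assms] in simp)
  then have "\<exists>l. l \<in> X \<and> econv d (pt s i) l" by (auto simp: econv_def)
  then have "lim s i \<in> X \<and> econv d (pt s i) (lim s i)" unfolding lim_def by (rule someI_ex)
  then show "lim s i \<in> X" "econv d (pt s i) (lim s i)" by blast+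
qed

lemma pt_shift: assumes "path s i a = Some q" shows "pt (s + a) q n = pt s i (a + n)"
  using path_shift_Some[OF assms, of n] by (simp add: pt_def)

lemma inf_shift: assumes "path s i a = Some q" "alive s i" shows "alive (s + a) q"
  using assms path_shift_Some[OF assms(1)] by (auto simp: alive_def) (metis)

lemma econv_shift: "econv d f l \<Longrightarrow> econv d (\<lambda>n. f (a + n)) l"
  unfolding econv_def by (metis add.commute trans_le_add2)

definition lim' :: "nat \<times> ('a \<times> nat) \<Rightarrow> 'a" where "lim' t = lim (fst t) (snd t)"

definition T :: "(nat \<times> ('a \<times> nat)) set" where
  "T = {t. born (fst t) (snd t) \<and> alive (fst t) (snd t) \<and> lim' t \<notin> A}"

definition L :: "'a fsum" where "L = (\<lambda>y. ecard {t\<in>T. lim' t = y})"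

definition g :: "nat \<times> ('a \<times> nat) \<Rightarrow> 'a \<times> nat" where
  "g t = (lim' t, to_nat_on {t'\<in>T. lim' t' = lim' t} t)"

lemma T_countable: "countable T"
proof -
  have "T \<subseteq> (SIGMA m:UNIV. I m)" by (auto simp: T_def born_def)
  moreover have "countable (SIGMA m:(UNIV::nat set). I m)"
    by (intro countable_SIGMA) (auto intro: Dbar_idx_countable[OF D])
  ultimately show ?thesis by (rule countable_subset)
qed

lemma g_bij: "bij_betw g T (fs_idx L)"
  unfolding g_def L_def by (rule count_rep[OF T_countable])

lemma g_fst: "fst (g t) = lim' t" by (simp add: g_def)

lemma T_lim: assumes "t \<in> T" shows "lim' t \<in> X" "lim' t \<notin> A" "econv d (pt (fst t) (snd t)) (lim' t)"
  using assms lim[of "snd t" "fst t"] by (auto simp: T_def born_def lim'_def)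

lemma L_Dbar: "L \<in> Dbar X A"
proof -
  have sub: "{y. L y \<noteq> 0} \<subseteq> lim' ` T"
  proof
    fix y assume "y \<in> {y. L y \<noteq> 0}"
    then have L0: "L y \<noteq> 0" by simp
    have "{t\<in>T. lim' t = y} \<noteq> {}"
    proof
      assume e: "{t\<in>T. lim' t = y} = {}"
      have "L y = 0" unfolding L_def e by (simp add: ecard_def zero_enat_def)
      then show False using L0 by simp
    qed
    then show "y \<in> lim' ` T" by blast
  qed
  have "countable (lim' ` T)" using T_countable by simp
  then have "countable {y. L y \<noteq> 0}" using sub by (rule countable_subset[rotated])
  moreover have "lim' ` T \<subseteq> X - A" using T_lim by blast
  ultimately show ?thesis using sub by (auto simp: Dbar_def)
qed

end

context chain begin

lemma orig_inf:
  assumes i: "i \<in> I J" and inf: "alive J i"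
  shows "alive (fst (orig J i)) (snd (orig J i))"
proof -
  define s i0 where "s = fst (orig J i)" "i0 = snd (orig J i)"
  have o: "s \<le> J" "born s i0" "path s i0 (J - s) = Some i" using orig[OF i] by (simp_all add: s_i0_def)
  have "path s i0 n \<noteq> None" for n
  proof (cases "n \<le> J - s")
    case True then show ?thesis using path_defined_le[of s i0 "J - s" n] o(3) by simp
  next
    case False
    then have "n = (J - s) + (n - (J - s))" by simp
    then have "path s i0 n = path (s + (J - s)) i (n - (J - s))"
      using path_shift_Some[OF o(3)] by metis
    also have "s + (J - s) = J" using o(1) by simp
    finally show ?thesis using inf by (simp add: alive_def)
  qed
  then show ?thesis by (simp add: alive_def s_i0_def)
qed

lemma inf_orig_inf:
  assumes i: "i \<in> I J" and inf: "alive (fst (orig J i)) (snd (orig J i))"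
  shows "alive J i"
proof -
  have o: "fst (orig J i) \<le> J" "path (fst (orig J i)) (snd (orig J i)) (J - fst (orig J i)) = Some i"
    using orig[OF i] by simp_all
  have "alive (fst (orig J i) + (J - fst (orig J i))) i" by (rule inf_shift[OF o(2) inf])
  then show ?thesis using o(1) by simp
qed

lemma orig_conv:
  assumes i: "i \<in> I J" and inf: "alive J i"
  shows "econv d (pt J i) (lim' (orig J i))" "lim' (orig J i) \<in> X"
proof -
  define s i0 where "s = fst (orig J i)" "i0 = snd (orig J i)"
  have o: "s \<le> J" "born s i0" "path s i0 (J - s) = Some i" using orig[OF i] by (simp_all add: s_i0_def)
  have inf0: "alive s i0" using orig_inf[OF i inf] by (simp add: s_i0_def)
  have i0: "i0 \<in> I s" using o(2) by (simp add: born_def)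
  have l: "econv d (pt s i0) (lim s i0)" "lim s i0 \<in> X" using lim[OF i0 inf0] by simp_all
  have "pt J i n = pt s i0 ((J - s) + n)" for n
    using pt_shift[OF o(3), of n] o(1) by simp
  then have "pt J i = (\<lambda>n. pt s i0 ((J - s) + n))" by auto
  then show "econv d (pt J i) (lim' (orig J i))" using econv_shift[OF l(1)]
    by (simp add: lim'_def s_i0_def)
  show "lim' (orig J i) \<in> X" using l(2) by (simp add: lim'_def s_i0_def)
qed

lemma orig_inj: assumes "i \<in> I J" "i' \<in> I J" "orig J i = orig J i'" shows "i = i'"
proof -
  have "Some i = path (fst (orig J i)) (snd (orig J i)) (J - fst (orig J i))"
    by (rule sym, rule orig(3)[OF assms(1)])
  also have "\<dots> = path (fst (orig J i')) (snd (orig J i')) (J - fst (orig J i'))"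
    by (simp only: assms(3))
  also have "\<dots> = Some i'" by (rule orig(3)[OF assms(2)])
  finally show ?thesis by simp
qed

definition Kp :: "nat \<Rightarrow> ('a \<times> nat) set" where
  "Kp J = {i \<in> I J. alive J i \<and> lim' (orig J i) \<notin> A}"

definition phip :: "nat \<Rightarrow> 'a \<times> nat \<Rightarrow> 'a \<times> nat" where
  "phip J i = g (orig J i)"

definition endn :: "nat \<Rightarrow> 'a \<times> nat \<Rightarrow> nat" where
  "endn J i = (LEAST n. path J i (Suc n) = None)"

definition zp :: "nat \<Rightarrow> 'a \<times> nat \<Rightarrow> 'a" where
  "zp J i = (if alive J i then lim' (orig J i) else z (J + endn J i) (the (path J i (endn J i))))"

definition ginv :: "'a \<times> nat \<Rightarrow> nat \<times> ('a \<times> nat)" where "ginv = inv_into T g"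

definition wp :: "'a \<times> nat \<Rightarrow> 'a" where
  "wp e = w (fst (ginv e) - 1) (snd (ginv e))"

lemma ginv: assumes "e \<in> fs_idx L" shows "ginv e \<in> T" "g (ginv e) = e"
  using assms g_bij by (auto simp: ginv_def bij_betw_def inv_into_into f_inv_into_f)

lemma ginv_inj: "e \<in> fs_idx L \<Longrightarrow> e' \<in> fs_idx L \<Longrightarrow> ginv e = ginv e' \<Longrightarrow> e = e'"
  using ginv(2) by metis

lemma g_in: "t \<in> T \<Longrightarrow> g t \<in> fs_idx L"
  using g_bij by (auto simp: bij_betw_def)

lemma endn:
  assumes "\<not> alive J i"
  shows "path J i (endn J i) \<noteq> None" "path J i (Suc (endn J i)) = None"
proof -
  have "\<exists>n. path J i n = None" using assms unfolding alive_def by (simp only: not_all not_not)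
  then obtain n where n: "path J i n = None" by blast
  then have "n \<noteq> 0" by (cases n) auto
  then obtain k where "n = Suc k" by (cases n) auto
  then have ex: "path J i (Suc k) = None" using n by simp
  show "path J i (Suc (endn J i)) = None" unfolding endn_def by (rule LeastI[of _ k]) (rule ex)
  show "path J i (endn J i) \<noteq> None"
  proof (cases "endn J i")
    case 0 then show ?thesis by simp
  next
    case (Suc k')
    then have "k' < endn J i" by simp
    then have "path J i (Suc k') \<noteq> None" unfolding endn_def by (rule not_less_Least)
    then show ?thesis using Suc by simp
  qed
qed

lemma late:
  assumes e: "e \<in> fs_idx L" "e \<notin> phip J ` Kp J"
  shows "J < fst (ginv e)"
proof (rule ccontr)
  assume "\<not> J < fst (ginv e)"
  then have sJ: "fst (ginv e) \<le> J" by simp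
  define s i0 where "s = fst (ginv e)" "i0 = snd (ginv e)"
  have t: "(s, i0) \<in> T" using ginv(1)[OF e(1)] by (simp add: s_i0_def)
  then have b: "born s i0" "alive s i0" "lim' (s, i0) \<notin> A" by (auto simp: T_def)
  obtain i where i: "path s i0 (J - s) = Some i" using b(2) by (rule alive_path)
  have iI: "i \<in> I J" using path_in[OF _ i] b(1) sJ by (simp add: born_def s_i0_def)
  have o: "orig J i = (s, i0)" by (rule orig_eq[OF b(1)]) (use sJ i in \<open>simp_all add: s_i0_def\<close>)
  have "alive (s + (J - s)) i" by (rule inf_shift[OF i b(2)])
  then have "alive J i" using sJ by (simp add: s_i0_def)
  then have "i \<in> Kp J" using iI o b(3) by (simp add: Kp_def)
  moreover have "phip J i = e" using o ginv(2)[OF e(1)] by (simp add: phip_def s_i0_def)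
  ultimately show False using e(2) by blast
qed

lemma matching_J: "is_matching A (\<beta> J) L (Kp J) (phip J) (zp J) wp"
  unfolding is_matching_def
proof (intro conjI)
  show "Kp J \<subseteq> I J" by (auto simp: Kp_def)
  show "inj_on (phip J) (Kp J)"
  proof (rule inj_onI)
    fix i i' assume ii: "i \<in> Kp J" "i' \<in> Kp J" "phip J i = phip J i'"
    have "orig J i \<in> T" "orig J i' \<in> T"
      using ii(1,2) orig(2) orig_inf by (auto simp: Kp_def T_def lim'_def)
    then have "orig J i = orig J i'" using ii(3) g_bij by (auto simp: phip_def bij_betw_def inj_on_def)
    then show "i = i'" by (rule orig_inj[rotated 2]) (use ii(1,2) in \<open>auto simp: Kp_def\<close>)
  qed
  show "phip J ` Kp J \<subseteq> fs_idx L"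
  proof
    fix e assume "e \<in> phip J ` Kp J"
    then obtain i where i: "i \<in> Kp J" "e = phip J i" by blast
    have "orig J i \<in> T" using i(1) orig(2) orig_inf by (auto simp: Kp_def T_def lim'_def)
    then show "e \<in> fs_idx L" using i(2) g_in by (simp add: phip_def)
  qed
  show "zp J ` (I J - Kp J) \<subseteq> A"
  proof
    fix y assume "y \<in> zp J ` (I J - Kp J)"
    then obtain i where i: "i \<in> I J" "i \<notin> Kp J" "y = zp J i" by blast
    show "y \<in> A"
    proof (cases "alive J i")
      case True then show ?thesis using i by (simp add: Kp_def zp_def)
    next
      case False
      obtain q where q: "path J i (endn J i) = Some q" using endn(1)[OF False] by auto
      have qK: "q \<notin> K (J + endn J i)" using endn(2)[OF False] q by (auto split: if_splits)
      have qI: "q \<in> I (J + endn J i)" using path_in[OF i(1) q] .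
      have "z (J + endn J i) q \<in> A" using Mm(4)[of "J + endn J i"] qK qI by blast
      then show ?thesis using i False q by (simp add: zp_def)
    qed
  qed
  show "wp ` (fs_idx L - phip J ` Kp J) \<subseteq> A"
  proof
    fix y assume "y \<in> wp ` (fs_idx L - phip J ` Kp J)"
    then obtain e where e: "e \<in> fs_idx L" "e \<notin> phip J ` Kp J" "y = wp e" by blast
    have lt: "J < fst (ginv e)" by (rule late[OF e(1,2)])
    have b: "born (fst (ginv e)) (snd (ginv e))" using ginv(1)[OF e(1)] by (simp add: T_def)
    define s where "s = fst (ginv e) - 1"
    have s: "fst (ginv e) = Suc s" using lt by (simp add: s_def)
    have "snd (ginv e) \<in> I (Suc s)" "snd (ginv e) \<notin> \<phi> s ` K s" using b s by (simp_all add: born_def)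
    then have "w s (snd (ginv e)) \<in> A" using Mm(5)[of s] by blast
    then show "y \<in> A" using e(3) by (simp add: wp_def s_def)
  qed
qed

end

lemma Inr_in_Un: "Inr e \<in> Inl ` A \<union> Inr ` B \<longleftrightarrow> e \<in> B" by auto
lemma Inl_in_Un: "Inl e \<in> Inl ` A \<union> Inr ` B \<longleftrightarrow> e \<in> A" by auto

context chain begin

definition R :: "nat \<Rightarrow> nat \<Rightarrow> ('a \<times> nat) + ('a \<times> nat) \<Rightarrow> ennreal" where
  "R J m x = (case x of Inl i \<Rightarrow> (case path J i (m - J) of None \<Rightarrow> 0 | Some q \<Rightarrow> c m (Inl q))
     | Inr e \<Rightarrow> if e \<in> phip J ` Kp J then 0 else
        (if Suc m = fst (ginv e) then c m (Inr (snd (ginv e)))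
         else if fst (ginv e) \<le> m then (case path (fst (ginv e)) (snd (ginv e)) (m - fst (ginv e)) of
                None \<Rightarrow> 0 | Some q \<Rightarrow> c m (Inl q))
         else 0))"

definition hh :: "nat \<Rightarrow> nat \<Rightarrow> ('a \<times> nat) + ('a \<times> nat) \<Rightarrow> ('a \<times> nat) + ('a \<times> nat)" where
  "hh J m x = (case x of Inl i \<Rightarrow> Inl (the (path J i (m - J)))
     | Inr e \<Rightarrow> if Suc m = fst (ginv e) then Inr (snd (ginv e))
                else Inl (the (path (fst (ginv e)) (snd (ginv e)) (m - fst (ginv e)))))"

definition SS :: "nat \<Rightarrow> nat \<Rightarrow> (('a \<times> nat) + ('a \<times> nat)) set" where
  "SS J m = Inl ` {i \<in> I J. path J i (m - J) \<noteq> None} \<union>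
     Inr ` {e \<in> fs_idx L. e \<notin> phip J ` Kp J \<and> (Suc m = fst (ginv e) \<or>
        (fst (ginv e) \<le> m \<and> path (fst (ginv e)) (snd (ginv e)) (m - fst (ginv e)) \<noteq> None))}"

lemma Inl_Inr_disj:
  assumes Jm: "J \<le> m" and i: "i \<in> I J" "path J i (m - J) = Some q"
    and s: "born s i0" "J < s" "s \<le> m" "path s i0 (m - s) = Some q"
  shows False
proof -
  define s0 i00 where "s0 = fst (orig J i)" "i00 = snd (orig J i)"
  have o: "s0 \<le> J" "born s0 i00" "path s0 i00 (J - s0) = Some i" using orig[OF i(1)] by (simp_all add: s0_i00_def)
  have "path s0 i00 ((J - s0) + (m - J)) = path (s0 + (J - s0)) i (m - J)" by (rule path_shift_Some[OF o(3)])
  also have "s0 + (J - s0) = J" using o(1) by simp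
  also have "(J - s0) + (m - J) = m - s0" using o(1) Jm by simp
  finally have "path s0 i00 (m - s0) = Some q" using i(2) by simp
  then have "s0 = s" using origin_uniq[OF o(2) s(1) _ s(3) _ s(4)] o(1) Jm by simp
  then show False using o(1) s(2) by simp
qed

lemma hh_inj: assumes Jm: "J \<le> m" shows "inj_on (hh J m) (SS J m)"
proof (rule inj_onI)
  fix x y assume x: "x \<in> SS J m" and y: "y \<in> SS J m" and h: "hh J m x = hh J m y"
  have Linl: "\<exists>q. path J i (m - J) = Some q \<and> hh J m (Inl i) = Inl q \<and> i \<in> I J" if "Inl i \<in> SS J m" for i
  proof -
    have "i \<in> I J" "path J i (m - J) \<noteq> None" using that unfolding SS_def Inl_in_Un mem_Collect_eq by blast+
    then obtain q where "path J i (m - J) = Some q" by auto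
    then show ?thesis using \<open>i \<in> I J\<close> by (simp add: hh_def)
  qed
  have Linr: "e \<in> fs_idx L \<and> e \<notin> phip J ` Kp J \<and> ((Suc m = fst (ginv e) \<and> hh J m (Inr e) = Inr (snd (ginv e))) \<or>
      (Suc m \<noteq> fst (ginv e) \<and> fst (ginv e) \<le> m \<and> (\<exists>q. path (fst (ginv e)) (snd (ginv e)) (m - fst (ginv e)) = Some q
         \<and> hh J m (Inr e) = Inl q)))" if "Inr e \<in> SS J m" for e
  proof -
    have e: "e \<in> fs_idx L" "e \<notin> phip J ` Kp J" "Suc m = fst (ginv e) \<or>
        (fst (ginv e) \<le> m \<and> path (fst (ginv e)) (snd (ginv e)) (m - fst (ginv e)) \<noteq> None)"
      using that unfolding SS_def Inr_in_Un mem_Collect_eq by blast+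
    show ?thesis
    proof (cases "Suc m = fst (ginv e)")
      case True then show ?thesis using e by (simp add: hh_def)
    next
      case False
      then obtain q where "path (fst (ginv e)) (snd (ginv e)) (m - fst (ginv e)) = Some q" "fst (ginv e) \<le> m"
        using e(3) by auto
      then show ?thesis using e False by (simp add: hh_def)
    qed
  qed
  have bT: "born (fst (ginv e)) (snd (ginv e))" "J < fst (ginv e)" if "e \<in> fs_idx L" "e \<notin> phip J ` Kp J" for e
    using ginv(1)[OF that(1)] late[OF that] by (auto simp: T_def)
  have pair: "ginv e = ginv e' \<Longrightarrow> e \<in> fs_idx L \<Longrightarrow> e' \<in> fs_idx L \<Longrightarrow> Inr e = Inr e'" for e e'
    using ginv_inj by blast
  show "x = y"
  proof (cases x)
    case (Inl i)
    obtain q where q: "path J i (m - J) = Some q" "hh J m x = Inl q" "i \<in> I J" using Linl[of i] x Inl by auto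
    show ?thesis
    proof (cases y)
      case (Inl i')
      obtain q' where q': "path J i' (m - J) = Some q'" "hh J m y = Inl q'" "i' \<in> I J" using Linl[of i'] y Inl by auto
      have "q = q'" using h q(2) q'(2) by simp
      then have "i = i'" using path_inj[OF q(3) q'(3) q(1)] q'(1) by simp
      then show ?thesis using Inl \<open>x = Inl i\<close> by simp
    next
      case (Inr e')
      have L: "e' \<in> fs_idx L \<and> e' \<notin> phip J ` Kp J \<and> ((Suc m = fst (ginv e') \<and> hh J m (Inr e') = Inr (snd (ginv e'))) \<or>
      (Suc m \<noteq> fst (ginv e') \<and> fst (ginv e') \<le> m \<and> (\<exists>q. path (fst (ginv e')) (snd (ginv e')) (m - fst (ginv e')) = Some q
         \<and> hh J m (Inr e') = Inl q)))" using Linr[of e'] y Inr by simp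
      then have b: "born (fst (ginv e')) (snd (ginv e'))" "J < fst (ginv e')" using bT by auto
      show ?thesis
      proof (cases "Suc m = fst (ginv e')")
        case True
        then have "hh J m y = Inr (snd (ginv e'))" using L Inr by auto
        then show ?thesis using h q(2) by simp
      next
        case False
        then obtain q' where q': "path (fst (ginv e')) (snd (ginv e')) (m - fst (ginv e')) = Some q'"
          "hh J m y = Inl q'" "fst (ginv e') \<le> m" using L Inr by auto
        have "q = q'" using h q(2) q'(2) by simp
        then have False using Inl_Inr_disj[OF Jm q(3) q(1) b(1) b(2) q'(3)] q'(1) by simp
        then show ?thesis ..
      qed
    qed
  next
    case (Inr e)
    have L: "e \<in> fs_idx L \<and> e \<notin> phip J ` Kp J \<and> ((Suc m = fst (ginv e) \<and> hh J m (Inr e) = Inr (snd (ginv e))) \<or>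
      (Suc m \<noteq> fst (ginv e) \<and> fst (ginv e) \<le> m \<and> (\<exists>q. path (fst (ginv e)) (snd (ginv e)) (m - fst (ginv e)) = Some q
         \<and> hh J m (Inr e) = Inl q)))" using Linr[of e] x Inr by simp
    then have b: "born (fst (ginv e)) (snd (ginv e))" "J < fst (ginv e)" using bT by auto
    show ?thesis
    proof (cases y)
      case (Inl i')
      obtain q' where q': "path J i' (m - J) = Some q'" "hh J m y = Inl q'" "i' \<in> I J" using Linl[of i'] y Inl by auto
      show ?thesis
      proof (cases "Suc m = fst (ginv e)")
        case True
        then have "hh J m x = Inr (snd (ginv e))" using L Inr by auto
        then show ?thesis using h q'(2) by simp
      next
        case False
        then obtain q where q: "path (fst (ginv e)) (snd (ginv e)) (m - fst (ginv e)) = Some q"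
          "hh J m x = Inl q" "fst (ginv e) \<le> m" using L Inr by auto
        have "q = q'" using h q(2) q'(2) by simp
        then have False using Inl_Inr_disj[OF Jm q'(3) q'(1) b(1) b(2) q(3)] q(1) by simp
        then show ?thesis ..
      qed
    next
      case (Inr e')
      have L': "e' \<in> fs_idx L \<and> e' \<notin> phip J ` Kp J \<and> ((Suc m = fst (ginv e') \<and> hh J m (Inr e') = Inr (snd (ginv e'))) \<or>
      (Suc m \<noteq> fst (ginv e') \<and> fst (ginv e') \<le> m \<and> (\<exists>q. path (fst (ginv e')) (snd (ginv e')) (m - fst (ginv e')) = Some q
         \<and> hh J m (Inr e') = Inl q)))" using Linr[of e'] y Inr by simp
      then have b': "born (fst (ginv e')) (snd (ginv e'))" "J < fst (ginv e')" using bT by auto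
      have "ginv e = ginv e'"
      proof (cases "Suc m = fst (ginv e)")
        case True
        then have hx: "hh J m x = Inr (snd (ginv e))" using L \<open>x = Inr e\<close> by auto
        then have "Suc m = fst (ginv e')"
          using h L' Inr by auto
        then have "hh J m y = Inr (snd (ginv e'))" using L' Inr by auto
        then have "snd (ginv e) = snd (ginv e')" using h hx by simp
        then show ?thesis using True \<open>Suc m = fst (ginv e')\<close> by (simp add: prod_eq_iff)
      next
        case False
        then obtain q where q: "path (fst (ginv e)) (snd (ginv e)) (m - fst (ginv e)) = Some q"
          "hh J m x = Inl q" "fst (ginv e) \<le> m" using L \<open>x = Inr e\<close> by auto
        then have "Suc m \<noteq> fst (ginv e')" using h L' Inr by auto
        then obtain q' where q': "path (fst (ginv e')) (snd (ginv e')) (m - fst (ginv e')) = Some q'"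
          "hh J m y = Inl q'" "fst (ginv e') \<le> m" using L' Inr by auto
        have "q = q'" using h q(2) q'(2) by simp
        then have "fst (ginv e) = fst (ginv e') \<and> snd (ginv e) = snd (ginv e')"
          using origin_uniq[OF b(1) b'(1) q(3) q'(3) q(1)] q'(1) by simp
        then show ?thesis by (simp add: prod_eq_iff)
      qed
      then show ?thesis using ginv_inj L L' Inr \<open>x = Inr e\<close> by simp
    qed
  qed
qed

end

lemma Plus_Inl_iff[simp]: "Inl a \<in> A <+> B \<longleftrightarrow> a \<in> A" by auto
lemma Plus_Inr_iff[simp]: "Inr b \<in> A <+> B \<longleftrightarrow> b \<in> B" by auto

context chain begin

lemma R_reindex:
  assumes Jm: "J \<le> m" and F: "F \<subseteq> I J <+> fs_idx L"
  shows "lpn p F (R J m) \<le> ennreal ((1/2)^m)"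
proof -
  have "lpn p F (R J m) \<le> lpn p (I m <+> I (Suc m)) (c m)"
  proof (rule lpn_reindex[OF p0, of "F \<inter> SS J m" F "hh J m"])
    show "F \<inter> SS J m \<subseteq> F" by blast
    show "inj_on (hh J m) (F \<inter> SS J m)" using hh_inj[OF Jm] by (rule inj_on_subset) blast
    show "hh J m ` (F \<inter> SS J m) \<subseteq> I m <+> I (Suc m)"
    proof (rule image_subsetI)
      fix x assume "x \<in> F \<inter> SS J m"
      then have x: "x \<in> SS J m" by blast
      show "hh J m x \<in> I m <+> I (Suc m)"
      proof (cases x)
        case (Inl i)
        then have i: "i \<in> I J" "path J i (m - J) \<noteq> None" using x unfolding SS_def Inl_in_Un mem_Collect_eq by blast+
        then obtain q where q: "path J i (m - J) = Some q" by auto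
        have "q \<in> I (J + (m - J))" by (rule path_in[OF i(1) q])
        then show ?thesis using Inl q Jm by (simp add: hh_def)
      next
        case (Inr e)
        then have e: "e \<in> fs_idx L" "Suc m = fst (ginv e) \<or>
          (fst (ginv e) \<le> m \<and> path (fst (ginv e)) (snd (ginv e)) (m - fst (ginv e)) \<noteq> None)"
          using x unfolding SS_def Inr_in_Un mem_Collect_eq by blast+
        have b: "snd (ginv e) \<in> I (fst (ginv e))" using ginv(1)[OF e(1)] by (simp add: T_def born_def)
        show ?thesis
        proof (cases "Suc m = fst (ginv e)")
          case True then show ?thesis using Inr b by (simp add: hh_def)
        next
          case False
          then obtain q where q: "path (fst (ginv e)) (snd (ginv e)) (m - fst (ginv e)) = Some q" "fst (ginv e) \<le> m"
            using e(2) by auto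
          have "q \<in> I (fst (ginv e) + (m - fst (ginv e)))" by (rule path_in[OF b q(1)])
          then show ?thesis using Inr q False by (simp add: hh_def)
        qed
      qed
    qed
    show "R J m x \<le> (if x \<in> F \<inter> SS J m then c m (hh J m x) else 0)" if "x \<in> F" for x
    proof (cases x)
      case (Inl i)
      have iI: "i \<in> I J" using that F Inl by auto
      show ?thesis
      proof (cases "path J i (m - J)")
        case None then show ?thesis using Inl by (simp add: R_def)
      next
        case (Some q)
        then have "x \<in> SS J m" using Inl iI by (simp add: SS_def)
        then show ?thesis using Some Inl that by (simp add: R_def hh_def)
      qed
    next
      case (Inr e)
      have eL: "e \<in> fs_idx L" using that F Inr by auto
      show ?thesis
      proof (cases "e \<in> phip J ` Kp J")
        case True then show ?thesis using Inr by (simp add: R_def)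
      next
        case nK: False
        show ?thesis
        proof (cases "Suc m = fst (ginv e)")
          case True
          then have "x \<in> SS J m" using Inr eL nK by (simp add: SS_def)
          then show ?thesis using True Inr nK that by (simp add: R_def hh_def)
        next
          case False
          show ?thesis
          proof (cases "fst (ginv e) \<le> m")
            case le: True
            show ?thesis
            proof (cases "path (fst (ginv e)) (snd (ginv e)) (m - fst (ginv e))")
              case None then show ?thesis using Inr nK False le by (simp add: R_def)
            next
              case (Some q)
              then have "x \<in> SS J m" using Inr eL nK le by (simp add: SS_def)
              then show ?thesis using Some False le Inr nK that by (simp add: R_def hh_def)
            qed
          next
            case gt: False
            then show ?thesis using Inr nK False by (simp add: R_def)
          qed
        qed
      qed
    qed
  qed
  also have "\<dots> \<le> ennreal ((1/2)^m)" by (rule lpn_c)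
  finally show ?thesis .
qed

end

lemma sum_shift_ivl: "(\<Sum>m\<in>{a..<a+n}. f m) = (\<Sum>k<n. f (a+k::nat))"
  by (induction n) (simp_all add: add.commute)

lemma sum_shift_ivl': "(a::nat) \<le> b \<Longrightarrow> (\<Sum>m\<in>{a..<b}. f m) = (\<Sum>k<b-a. f (a+k))"
  using sum_shift_ivl[of f a "b - a"] by simp

lemma sum_mono_set_ennreal: "finite B \<Longrightarrow> A \<subseteq> B \<Longrightarrow> sum (f::_\<Rightarrow>ennreal) A \<le> sum f B"
  by (rule sum_mono2) auto

context chain begin

definition E :: "nat \<Rightarrow> nat \<Rightarrow> ('a \<times> nat) + ('a \<times> nat) \<Rightarrow> ennreal" where
  "E J M x = (case x of Inl i \<Rightarrow> if alive J i then d (pt J i (M - J)) (lim' (orig J i)) else 0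
    | Inr e \<Rightarrow> if e \<in> phip J ` Kp J then 0
       else d (pt (fst (ginv e)) (snd (ginv e)) (M - fst (ginv e))) (lim' (ginv e)))"

definition goodM :: "nat \<Rightarrow> nat \<Rightarrow> ('a \<times> nat) + ('a \<times> nat) \<Rightarrow> bool" where
  "goodM J M x \<longleftrightarrow> J < M \<and> (case x of Inl i \<Rightarrow> (\<not> alive J i \<longrightarrow> J + endn J i < M)
     | Inr e \<Rightarrow> (e \<notin> phip J ` Kp J \<longrightarrow> fst (ginv e) \<le> M))"

lemma R_Inl: "path J i k = Some q \<Longrightarrow> R J (J + k) (Inl i) = c (J + k) (Inl q)"
  by (simp add: R_def)

lemma R_Inr_late: assumes "e \<notin> phip J ` Kp J" "path (fst (ginv e)) (snd (ginv e)) k = Some q"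
  shows "R J (fst (ginv e) + k) (Inr e) = c (fst (ginv e) + k) (Inl q)"
  using assms by (simp add: R_def)

lemma R_Inr_new: assumes "e \<notin> phip J ` Kp J" "Suc m = fst (ginv e)"
  shows "R J m (Inr e) = c m (Inr (snd (ginv e)))"
  using assms by (simp add: R_def)

lemma chain_sum_R:
  assumes i: "i \<in> I s" and def: "path s i n \<noteq> None"
    and Rk: "\<And>k q. k < n \<Longrightarrow> path s i k = Some q \<Longrightarrow> Q k = c (s + k) (Inl q)"
  shows "d (pt s i 0) (pt s i n) \<le> (\<Sum>k<n. Q k)"
proof -
  have "d (pt s i 0) (pt s i (0 + n)) \<le> (\<Sum>k<n. c (s + 0 + k) (Inl (the (path s i (0 + k)))))"
    by (rule chain_dist[OF i]) (use def in simp)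
  also have "\<dots> = (\<Sum>k<n. Q k)"
  proof (rule sum.cong)
    fix k assume "k \<in> {..<n}"
    then have "path s i k \<noteq> None" using path_defined_le[OF def, of k] by simp
    then obtain q where "path s i k = Some q" by auto
    then show "c (s + 0 + k) (Inl (the (path s i (0 + k)))) = Q k" using Rk \<open>k \<in> {..<n}\<close> by simp
  qed simp
  finally show ?thesis by simp
qed

lemma entry_bound:
  assumes x: "x \<in> I J <+> fs_idx L" and good: "goodM J M x"
  shows "mcv d (Kp J) (phip J) (zp J) wp x \<le> (\<Sum>m\<in>{J..<M}. R J m x) + E J M x"
proof (cases x)
  case (Inl i)
  have iI: "i \<in> I J" using x Inl by simp
  have JM: "J < M" using good by (simp add: goodM_def)
  show ?thesis
  proof (cases "alive J i")
    case True
    have lim: "lim' (orig J i) \<in> X" using orig_conv(2)[OF iI True] .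
    have cv: "mcv d (Kp J) (phip J) (zp J) wp x = d (fst i) (lim' (orig J i))"
      using Inl True by (simp add: phip_def g_fst zp_def)
    have p0: "pt J i 0 = fst i" by (simp add: pt_def)
    have Xm: "pt J i (M - J) \<in> X" using pt_X[OF iI] True by (simp add: alive_def)
    have "d (fst i) (lim' (orig J i)) \<le> d (fst i) (pt J i (M - J)) + d (pt J i (M - J)) (lim' (orig J i))"
      by (rule emetric_tri[OF em IX[OF iI] Xm lim])
    also have "d (fst i) (pt J i (M - J)) \<le> (\<Sum>k<M - J. R J (J + k) (Inl i))"
      unfolding p0[symmetric]
      by (rule chain_sum_R[OF iI]) (use True R_Inl in \<open>auto simp: alive_def\<close>)
    also have "(\<Sum>k<M - J. R J (J + k) (Inl i)) = (\<Sum>m\<in>{J..<M}. R J m x)"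
      using sum_shift_ivl'[of J M "\<lambda>m. R J m x"] JM Inl by simp
    finally show ?thesis using cv True Inl by (simp add: E_def)
  next
    case False
    define n where "n = endn J i"
    obtain q where q: "path J i n = Some q" using endn(1)[OF False] by (auto simp: n_def)
    have qK: "q \<notin> K (J + n)" using endn(2)[OF False] q by (auto simp: n_def split: if_splits)
    have qI: "q \<in> I (J + n)" by (rule path_in[OF iI q])
    have zA: "z (J + n) q \<in> X" using Mm(4)[of "J + n"] qK qI AX by blast
    have nM: "J + n < M" using good Inl False by (simp add: goodM_def n_def)
    have nK: "i \<notin> Kp J" using False by (simp add: Kp_def)
    have cv: "mcv d (Kp J) (phip J) (zp J) wp x = d (fst i) (z (J + n) q)"
      using Inl False nK q by (simp add: zp_def n_def)
    have p0: "pt J i 0 = fst i" by (simp add: pt_def)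
    have pn: "pt J i n = fst q" using q by (simp add: pt_def)
    have "d (fst i) (z (J + n) q) \<le> d (fst i) (fst q) + d (fst q) (z (J + n) q)"
      by (rule emetric_tri[OF em IX[OF iI] IX[OF qI] zA])
    also have "d (fst i) (fst q) \<le> (\<Sum>k<n. R J (J + k) (Inl i))"
      unfolding p0[symmetric] pn[symmetric]
      by (rule chain_sum_R[OF iI]) (use q R_Inl in auto)
    also have "d (fst q) (z (J + n) q) = R J (J + n) (Inl i)"
      using R_Inl[OF q] qK by simp
    also have "(\<Sum>k<n. R J (J + k) (Inl i)) + R J (J + n) (Inl i) = (\<Sum>k<Suc n. R J (J + k) (Inl i))"
      by simp
    also have "\<dots> \<le> (\<Sum>k<M - J. R J (J + k) (Inl i))"
      using nM by (intro sum_mono_set_ennreal) auto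
    also have "\<dots> = (\<Sum>m\<in>{J..<M}. R J m x)"
      using sum_shift_ivl'[of J M "\<lambda>m. R J m x"] JM Inl by simp
    finally show ?thesis using cv by (simp add: E_def Inl False)
  qed
next
  case (Inr e)
  have eL: "e \<in> fs_idx L" using x Inr by simp
  have JM: "J < M" using good by (simp add: goodM_def)
  show ?thesis
  proof (cases "e \<in> phip J ` Kp J")
    case True then show ?thesis using Inr by simp
  next
    case nK: False
    define s i0 where "s = fst (ginv e)" "i0 = snd (ginv e)"
    have t: "ginv e \<in> T" by (rule ginv(1)[OF eL])
    then have b: "born s i0" "alive s i0" "lim' (ginv e) \<in> X" using T_lim[OF t]
      by (auto simp: T_def s_i0_def)
    have Js: "J < s" using late[OF eL nK] by (simp add: s_i0_def)
    have sM: "s \<le> M" using good Inr nK by (simp add: goodM_def s_i0_def)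
    define r where "r = s - 1"
    have sr: "s = Suc r" using Js by (simp add: r_def)
    have i0: "i0 \<in> I (Suc r)" "i0 \<notin> \<phi> r ` K r" using b(1) sr by (simp_all add: born_def)
    have wA: "w r i0 \<in> X" using Mm(5)[of r] i0 AX by blast
    have cv: "mcv d (Kp J) (phip J) (zp J) wp x = d (w r i0) (lim' (ginv e))"
      using Inr nK ginv(2)[OF eL] g_fst[of "ginv e"] by (simp add: wp_def s_i0_def r_def)
    have Xi0: "fst i0 \<in> X" using IX[OF i0(1)] .
    have i0s: "i0 \<in> I s" using i0(1) sr by simp
    have Xm: "pt s i0 (M - s) \<in> X" using pt_X[OF i0s] b(2) by (simp add: alive_def)
    have p0: "pt s i0 0 = fst i0" by (simp add: pt_def)
    have "d (w r i0) (lim' (ginv e)) \<le> d (w r i0) (fst i0) + d (fst i0) (lim' (ginv e))"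
      by (rule emetric_tri[OF em wA Xi0 b(3)])
    also have "d (fst i0) (lim' (ginv e)) \<le> d (fst i0) (pt s i0 (M - s)) + d (pt s i0 (M - s)) (lim' (ginv e))"
      by (rule emetric_tri[OF em Xi0 Xm b(3)])
    also have "d (fst i0) (pt s i0 (M - s)) \<le> (\<Sum>k<M - s. R J (s + k) (Inr e))"
      unfolding p0[symmetric]
      by (rule chain_sum_R[OF i0s]) (use b(2) R_Inr_late[OF nK] in \<open>auto simp: alive_def s_i0_def\<close>)
    also have "d (w r i0) (fst i0) = R J r (Inr e)"
      using R_Inr_new[OF nK, of r] sr i0(2) by (simp add: s_i0_def)
    also have "(\<Sum>k<M - s. R J (s + k) (Inr e)) = (\<Sum>m\<in>{s..<M}. R J m (Inr e))"
      using sum_shift_ivl'[of s M "\<lambda>m. R J m (Inr e)"] sM by simp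
    also have "R J r (Inr e) + ((\<Sum>m\<in>{s..<M}. R J m (Inr e)) + d (pt s i0 (M - s)) (lim' (ginv e)))
       = (\<Sum>m\<in>{r..<M}. R J m (Inr e)) + d (pt s i0 (M - s)) (lim' (ginv e))"
    proof -
      have "r < M" using sr sM by simp
      then have "(\<Sum>m\<in>{r..<M}. R J m (Inr e)) = R J r (Inr e) + (\<Sum>m\<in>{Suc r..<M}. R J m (Inr e))"
        by (rule sum.atLeast_Suc_lessThan)
      then show ?thesis using sr by (simp add: add.assoc)
    qed
    also have "(\<Sum>m\<in>{r..<M}. R J m (Inr e)) \<le> (\<Sum>m\<in>{J..<M}. R J m (Inr e))"
      using Js sr by (intro sum_mono_set_ennreal) auto
    finally show ?thesis using cv Inr nK by (simp add: E_def s_i0_def add_right_mono)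
  qed
qed

end

context chain begin

lemma good_ex:
  assumes x: "x \<in> I J <+> fs_idx L" and eps: "\<epsilon> > 0"
  shows "\<exists>Mx. \<forall>M\<ge>Mx. goodM J M x \<and> E J M x \<le> ennreal \<epsilon>"
proof (cases x)
  case (Inl i)
  have iI: "i \<in> I J" using x Inl by simp
  show ?thesis
  proof (cases "alive J i")
    case True
    have "econv d (pt J i) (lim' (orig J i))" by (rule orig_conv(1)[OF iI True])
    then obtain N where N: "\<forall>n\<ge>N. d (pt J i n) (lim' (orig J i)) < ennreal \<epsilon>"
      using eps unfolding econv_def by (meson ennreal_less_zero_iff)
    show ?thesis
    proof (intro exI[of _ "J + N + 1"] allI impI conjI)
      fix M assume "J + N + 1 \<le> M"
      then show "goodM J M x" using Inl True by (simp add: goodM_def)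
      have "N \<le> M - J" using \<open>J + N + 1 \<le> M\<close> by simp
      then show "E J M x \<le> ennreal \<epsilon>" using N Inl True by (simp add: E_def less_imp_le)
    qed
  next
    case False
    show ?thesis
    proof (intro exI[of _ "J + endn J i + 1"] allI impI conjI)
      fix M assume "J + endn J i + 1 \<le> M"
      then show "goodM J M x" using Inl False by (simp add: goodM_def)
      show "E J M x \<le> ennreal \<epsilon>" using Inl False by (simp add: E_def)
    qed
  qed
next
  case (Inr e)
  have eL: "e \<in> fs_idx L" using x Inr by simp
  show ?thesis
  proof (cases "e \<in> phip J ` Kp J")
    case True
    show ?thesis
    proof (intro exI[of _ "J + 1"] allI impI conjI)
      fix M assume "J + 1 \<le> M"
      then show "goodM J M x" using Inr True by (simp add: goodM_def)
      show "E J M x \<le> ennreal \<epsilon>" using Inr True by (simp add: E_def)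
    qed
  next
    case False
    have t: "ginv e \<in> T" by (rule ginv(1)[OF eL])
    have "econv d (pt (fst (ginv e)) (snd (ginv e))) (lim' (ginv e))" by (rule T_lim(3)[OF t])
    then obtain N where N: "\<forall>n\<ge>N. d (pt (fst (ginv e)) (snd (ginv e)) n) (lim' (ginv e)) < ennreal \<epsilon>"
      using eps unfolding econv_def by (meson ennreal_less_zero_iff)
    show ?thesis
    proof (intro exI[of _ "J + fst (ginv e) + N + 1"] allI impI conjI)
      fix M assume M: "J + fst (ginv e) + N + 1 \<le> M"
      then show "goodM J M x" using Inr False by (simp add: goodM_def)
      have "N \<le> M - fst (ginv e)" using M by simp
      then show "E J M x \<le> ennreal \<epsilon>" using N Inr False by (simp add: E_def less_imp_le)
    qed
  qed
qed

lemma W_bound: "Wp d A p (\<beta> J) L \<le> ennreal (2 * (1/2)^J)"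
proof -
  have "Wp d A p (\<beta> J) L \<le> matching_cost d p (\<beta> J) L (Kp J) (phip J) (zp J) wp"
    by (rule Wp_le[OF matching_J])
  also have "\<dots> = lpn p (I J <+> fs_idx L) (mcv d (Kp J) (phip J) (zp J) wp)"
    by (rule cost_lpn[OF matching_J])
  also have "\<dots> \<le> ennreal (2 * (1/2)^J)"
  proof (rule lpn_finite_sup[OF p0])
    fix F assume F: "finite F" "F \<subseteq> I J <+> fs_idx L"
    show "lpn p F (mcv d (Kp J) (phip J) (zp J) wp) \<le> ennreal (2 * (1/2)^J)"
    proof (rule ennreal_le_epsilon)
      fix \<delta> :: real assume \<delta>: "0 < \<delta>"
      define \<epsilon> where "\<epsilon> = \<delta> / (real (card F) + 1)"
      have eps: "\<epsilon> > 0" using \<delta> by (simp add: \<epsilon>_def)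
      have "\<forall>x\<in>F. \<exists>Mx. \<forall>M\<ge>Mx. goodM J M x \<and> E J M x \<le> ennreal \<epsilon>"
        using good_ex[OF _ eps] F(2) by blast
      then obtain Mf where Mf: "\<And>x M. x \<in> F \<Longrightarrow> Mf x \<le> M \<Longrightarrow> goodM J M x \<and> E J M x \<le> ennreal \<epsilon>"
        by metis
      define M where "M = J + 1 + (\<Sum>x\<in>F. Mf x)"
      have gM: "goodM J M x" "E J M x \<le> ennreal \<epsilon>" if "x \<in> F" for x
      proof -
        have "Mf x \<le> (\<Sum>x\<in>F. Mf x)" by (intro member_le_sum) (use F(1) that in auto)
        then have "Mf x \<le> M" by (simp add: M_def)
        then show "goodM J M x" "E J M x \<le> ennreal \<epsilon>" using Mf[OF that] by auto
      qed
      have JM: "J < M" by (simp add: M_def)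
      have "lpn p F (mcv d (Kp J) (phip J) (zp J) wp) \<le> lpn p F (\<lambda>x. (\<Sum>m\<in>{J..<M}. R J m x) + E J M x)"
        using entry_bound gM(1) F(2) by (intro lpn_mono[OF p0]) blast
      also have "\<dots> \<le> lpn p F (\<lambda>x. \<Sum>m\<in>{J..<M}. R J m x) + lpn p F (E J M)"
        by (rule lpn_minkowski[OF p])
      also have "\<dots> \<le> (\<Sum>m\<in>{J..<M}. lpn p F (R J m)) + lpn p F (E J M)"
        by (intro add_right_mono lpn_sum[OF p]) simp
      also have "\<dots> \<le> (\<Sum>m\<in>{J..<M}. ennreal ((1/2)^m)) + ennreal (real (card F) * \<epsilon>)"
        using R_reindex F(2) gM(2) eps F(1) by (intro add_mono sum_mono lpn_const[OF p]) auto
      also have "(\<Sum>m\<in>{J..<M}. ennreal ((1/2)^m)) = ennreal (\<Sum>k<M - J. (1/2)^(J + k))"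
        using sum_shift_ivl'[of J M "\<lambda>m. ennreal ((1/2)^m)"] JM by (simp add: sum_ennreal)
      also have "\<dots> \<le> ennreal (2 * (1/2)^J)" by (intro ennreal_leI geom_half_le)
      also have "real (card F) * \<epsilon> \<le> \<delta>"
      proof -
        have "real (card F) * \<epsilon> = \<delta> * (real (card F) / (real (card F) + 1))"
          by (simp add: \<epsilon>_def)
        also have "\<dots> \<le> \<delta> * 1" using \<delta> by (intro mult_left_mono) auto
        finally show ?thesis by simp
      qed
      then have "ennreal (real (card F) * \<epsilon>) \<le> ennreal \<delta>" by (rule ennreal_leI)
      finally show "lpn p F (mcv d (Kp J) (phip J) (zp J) wp) \<le> ennreal (2 * (1/2)^J) + ennreal \<delta>"
        by (simp add: add_left_mono)
    qed
  qed
  finally show ?thesis .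
qed

end

primrec mkN :: "(nat \<Rightarrow> nat) \<Rightarrow> nat \<Rightarrow> nat" where
  "mkN f 0 = f 0"
| "mkN f (Suc k) = max (f (Suc k)) (Suc (mkN f k))"

lemma mkN_ge: "f k \<le> mkN f k"
  by (cases k) auto

lemma mkN_Suc: "mkN f k \<le> mkN f (Suc k)"
  by simp

theorem theorem6p9:
  fixes X A :: "'a set" and d :: "'a \<Rightarrow> 'a \<Rightarrow> ennreal" and p :: real
  assumes "metric_pair X d A"
    and "1 \<le> p"
    and "ecomplete_on X d"
  shows "ecomplete_on (Dbar_p X d A p) (Wp d A p)"
  unfolding ecomplete_on_def
proof (intro allI impI, elim conjE)
  fix s :: "nat \<Rightarrow> 'a fsum"
  assume sD: "\<forall>n. s n \<in> Dbar_p X d A p"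
    and cau: "\<forall>e>0. \<exists>N. \<forall>m\<ge>N. \<forall>n\<ge>N. Wp d A p (s m) (s n) < e"
  have mp: "metric_pair X d A" and p: "1 \<le> p" and comp: "ecomplete_on X d" using assms by auto
  have em: "emetric_on X d" and AX: "A \<subseteq> X" using mp by (auto simp: metric_pair_def eclosed_in_def)
  have sD': "s n \<in> Dbar X A" for n using sD by (simp add: Dbar_p_def)
  have "\<forall>k. \<exists>N. \<forall>m\<ge>N. \<forall>n\<ge>N. Wp d A p (s m) (s n) < ennreal ((1/2)^k)"
    using cau by simp
  then obtain Nf where Nf: "\<And>k m n. Nf k \<le> m \<Longrightarrow> Nf k \<le> n \<Longrightarrow> Wp d A p (s m) (s n) < ennreal ((1/2)^k)"
    by metis
  define N where "N = mkN Nf"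
  have NW: "Wp d A p (s m) (s n) < ennreal ((1/2)^k)" if "N k \<le> m" "N k \<le> n" for k m n
    using Nf[of k m n] that mkN_ge[of Nf k] by (simp add: N_def)
  define \<beta> where "\<beta> k = s (N k)" for k
  have "\<forall>k. \<exists>K \<phi> z w. is_matching A (\<beta> k) (\<beta> (Suc k)) K \<phi> z w \<and>
      matching_cost d p (\<beta> k) (\<beta> (Suc k)) K \<phi> z w < ennreal ((1/2)^k)"
  proof
    fix k
    have "Wp d A p (\<beta> k) (\<beta> (Suc k)) < ennreal ((1/2)^k)"
      unfolding \<beta>_def by (rule NW) (use mkN_Suc[of Nf k] in \<open>simp_all add: N_def\<close>)
    then obtain K \<phi> z w where "is_matching A (\<beta> k) (\<beta> (Suc k)) K \<phi> z w"
      "matching_cost d p (\<beta> k) (\<beta> (Suc k)) K \<phi> z w < ennreal ((1/2)^k)" by (rule Wp_lessE)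
    then show "\<exists>K \<phi> z w. is_matching A (\<beta> k) (\<beta> (Suc k)) K \<phi> z w \<and>
      matching_cost d p (\<beta> k) (\<beta> (Suc k)) K \<phi> z w < ennreal ((1/2)^k)" by blast
  qed
  then obtain Kf \<phi>f zf wf where Mf: "\<And>k. is_matching A (\<beta> k) (\<beta> (Suc k)) (Kf k) (\<phi>f k) (zf k) (wf k)"
    "\<And>k. matching_cost d p (\<beta> k) (\<beta> (Suc k)) (Kf k) (\<phi>f k) (zf k) (wf k) < ennreal ((1/2)^k)"
    by metis
  interpret ch: chain X d A p \<beta> Kf \<phi>f zf wf
  proof
    show "metric_pair X d A" by (rule mp)
    show "1 \<le> p" by (rule p)
    show "ecomplete_on X d" by (rule comp)
    show "\<beta> m \<in> Dbar X A" for m by (simp add: \<beta>_def sD')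
    show "is_matching A (\<beta> m) (\<beta> (Suc m)) (Kf m) (\<phi>f m) (zf m) (wf m)" for m by (rule Mf(1))
    show "matching_cost d p (\<beta> m) (\<beta> (Suc m)) (Kf m) (\<phi>f m) (zf m) (wf m) \<le> ennreal ((1/2)^m)" for m
      using Mf(2)[of m] by simp
  qed
  have LD: "ch.L \<in> Dbar X A" by (rule ch.L_Dbar)
  have "Wp d A p (\<beta> 0) ch.L \<le> ennreal (2 * (1/2)^0)" by (rule ch.W_bound)
  then have "Wp d A p (\<beta> 0) ch.L < top" by (simp add: le_less_trans)
  moreover have "\<beta> 0 \<in> Dbar_p X d A p" by (simp add: \<beta>_def sD)
  ultimately have LDp: "ch.L \<in> Dbar_p X d A p"
    using Dbar_p_close[OF mp p LD] by blast
  show "\<exists>l\<in>Dbar_p X d A p. \<forall>e>0. \<exists>N. \<forall>n\<ge>N. Wp d A p (s n) l < e"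
  proof (intro bexI[OF _ LDp] allI impI)
    fix e :: ennreal assume e: "e > 0"
    define r where "r = (if e = top then 1 else enn2real e)"
    have r: "r > 0" "ennreal r \<le> e" using e by (auto simp: r_def enn2real_positive_iff less_top)
    obtain K where K: "2*(1/2::real)^K < r" using half_pow_small[OF r(1)] by blast
    define k where "k = Suc K"
    show "\<exists>N'. \<forall>n\<ge>N'. Wp d A p (s n) ch.L < e"
    proof (intro exI allI impI)
      fix n assume n: "N k \<le> n"
      have t: "Wp d A p (s n) ch.L \<le> Wp d A p (s n) (\<beta> k) + Wp d A p (\<beta> k) ch.L"
        by (rule Wp_triangle[OF em AX p sD' _ LD]) (simp add: \<beta>_def sD')
      have a: "Wp d A p (s n) (\<beta> k) < ennreal ((1/2)^k)"
        unfolding \<beta>_def by (rule NW) (use n in simp_all)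
      have b: "Wp d A p (\<beta> k) ch.L \<le> ennreal (2 * (1/2)^k)" by (rule ch.W_bound)
      obtain u where u: "Wp d A p (s n) (\<beta> k) = ennreal u" "0 \<le> u" "u < (1/2)^k"
        using a by (cases "Wp d A p (s n) (\<beta> k)" rule: ennreal_cases) (auto simp: ennreal_less_iff)
      have "Wp d A p (s n) ch.L \<le> ennreal u + ennreal (2 * (1/2)^k)"
        using t b u(1) by (metis add_left_mono order_trans)
      also have "\<dots> = ennreal (u + 2 * (1/2)^k)" using u(2) by (simp add: ennreal_plus[symmetric] del: ennreal_plus)
      also have "\<dots> < ennreal (3 * (1/2)^k)" using u by (intro ennreal_lessI) auto
      also have "\<dots> \<le> ennreal r"
      proof (rule ennreal_leI)
        have "3 * (1/2::real)^k = (3/2) * (1/2)^K" by (simp add: k_def)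
        also have "\<dots> \<le> 2 * (1/2)^K" by simp
        finally show "3 * (1/2::real)^k \<le> r" using K by simp
      qed
      also have "\<dots> \<le> e" by (rule r(2))
      finally show "Wp d A p (s n) ch.L < e" .
    qed
  qed
qed

end
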